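(* On $(\mathbb C^2)^{\otimes3}$ (three parties, one qubit each) let $S_3=\mathrm{span}\{|000\rangle,\ |100\rangle-|010\rangle,\ |100\rangle+|010\rangle+|001\rangle\}$, a 3-dimensional subspace. Then $S_3$ is locally indistinguishable: no orthonormal basis of $S_3$ is perfectly distinguishable by LOCC.
   Context: "Perfectly distinguishable by LOCC": there is a finite-round protocol, in each round one party performing a local measurement and broadcasting the outcome, that identifies with probability 1 which state of the set was given. *)

theory Defs
  imports Complex_Main
begin

text \<open>A pure (possibly unnormalised) state of (C^2)^{\<otimes>3} is a function
  from computational basis labels (x1,x2,x3) to amplitudes; x1 belongs to party 0,
  x2 to party 1, x3 to party 2.\<close>

type_synonym state = "bool \<times> bool \<times> bool \<Rightarrow> complex"

text \<open>A local operator on one qubit (a 2x2 complex matrix, entries K out in).\<close>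
type_synonym qop = "bool \<Rightarrow> bool \<Rightarrow> complex"

definition ket :: "bool \<Rightarrow> bool \<Rightarrow> bool \<Rightarrow> state" where
  "ket a b c = (\<lambda>x. if x = (a, b, c) then 1 else 0)"

definition inner3 :: "state \<Rightarrow> state \<Rightarrow> complex" where
  "inner3 \<phi> \<psi> = (\<Sum>x\<in>UNIV. cnj (\<phi> x) * \<psi> x)"

definition apply_local :: "nat \<Rightarrow> qop \<Rightarrow> state \<Rightarrow> state" where
  "apply_local p K \<psi> = (\<lambda>(x1, x2, x3).
     if p = 0 then (\<Sum>b\<in>UNIV. K x1 b * \<psi> (b, x2, x3))
     else if p = 1 then (\<Sum>b\<in>UNIV. K x2 b * \<psi> (x1, b, x3))
     else (\<Sum>b\<in>UNIV. K x3 b * \<psi> (x1, x2, b)))"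

definition complete_meas :: "qop list \<Rightarrow> bool" where
  "complete_meas Ks \<longleftrightarrow>
     (\<forall>a c. (\<Sum>K\<leftarrow>Ks. \<Sum>b\<in>UNIV. cnj (K b a) * K b c) = (if a = c then 1 else 0))"

text \<open>Finite-round LOCC protocols: a finite tree. At an inner node one party p performs a
  local measurement with finitely many outcomes (Kraus operators), broadcasts the outcome
  and the protocol continues with the subprotocol attached to that outcome (so later
  measurements may depend on all previous outcomes). At a leaf a guess of the index of
  the state is announced.\<close>
datatype proto = Guess nat | Measure nat "(qop \<times> proto) list"

inductive wf_proto :: "proto \<Rightarrow> bool" where
  "wf_proto (Guess j)"
| "\<lbrakk> p < 3; complete_meas (map fst ms); \<forall>(K, q)\<in>set ms. wf_proto q \<rbrakk>
     \<Longrightarrow> wf_proto (Measure p ms)"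

text \<open>\<open>correct \<psi> i P\<close>: running P on the (unnormalised, post-measurement) state \<psi>,
  every leaf reached with nonzero probability guesses i.\<close>
inductive correct :: "state \<Rightarrow> nat \<Rightarrow> proto \<Rightarrow> bool" where
  "\<psi> = (\<lambda>_. 0) \<or> j = i \<Longrightarrow> correct \<psi> i (Guess j)"
| "\<forall>(K, q)\<in>set ms. correct (apply_local p K \<psi>) i q \<Longrightarrow> correct \<psi> i (Measure p ms)"

definition LOCC_distinguishable :: "nat \<Rightarrow> (nat \<Rightarrow> state) \<Rightarrow> bool" where
  "LOCC_distinguishable n \<psi> \<longleftrightarrow>
     (\<exists>P. wf_proto P \<and> (\<forall>i<n. correct (\<psi> i) i P))"

definition S3 :: "state set" where
  "S3 = {v. \<exists>a b c. v = (\<lambda>x. a * ket False False False x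
                     + b * (ket True False False x - ket False True False x)
                     + c * (ket True False False x + ket False True False x
                            + ket False False True x))}"

definition is_onb :: "state set \<Rightarrow> nat \<Rightarrow> (nat \<Rightarrow> state) \<Rightarrow> bool" where
  "is_onb S n \<psi> \<longleftrightarrow>
     (\<forall>i<n. \<psi> i \<in> S) \<and>
     (\<forall>i<n. \<forall>j<n. inner3 (\<psi> i) (\<psi> j) = (if i = j then 1 else 0)) \<and>
     (\<forall>v\<in>S. \<exists>c. v = (\<lambda>x. \<Sum>i<n. c i * \<psi> i x))"

end

theory Submission
  imports Defs
begin

lemma sum_bool: "(\<Sum>x\<in>(UNIV::bool set). f x) = f False + f True"
  by (simp add: UNIV_bool)

lemma sum_triple: "(\<Sum>x\<in>(UNIV::(bool\<times>bool\<times>bool) set). f x) =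
   f (False,False,False) + f (False,False,True) + f (False,True,False) + f (False,True,True) +
   f (True,False,False) + f (True,False,True) + f (True,True,False) + f (True,True,True)"
proof -
  have h: "(UNIV::(bool\<times>bool\<times>bool) set) = {(False,False,False), (False,False,True), (False,True,False),
     (False,True,True), (True,False,False), (True,False,True), (True,True,False), (True,True,True)}"
    by auto
  show ?thesis unfolding h by (simp add: algebra_simps)
qed

definition Mq :: "qop \<Rightarrow> bool \<Rightarrow> bool \<Rightarrow> complex" where
  "Mq K a c = (\<Sum>b\<in>UNIV. cnj (K b a) * K b c)"

definition Gam :: "nat \<Rightarrow> state \<Rightarrow> state \<Rightarrow> bool \<Rightarrow> bool \<Rightarrow> complex" where
  "Gam p \<phi> \<chi> a c = (if p = 0 then (\<Sum>y\<in>UNIV. \<Sum>z\<in>UNIV. cnj (\<phi> (a,y,z)) * \<chi> (c,y,z))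
     else if p = 1 then (\<Sum>y\<in>UNIV. \<Sum>z\<in>UNIV. cnj (\<phi> (y,a,z)) * \<chi> (y,c,z))
     else (\<Sum>y\<in>UNIV. \<Sum>z\<in>UNIV. cnj (\<phi> (y,z,a)) * \<chi> (y,z,c)))"

lemma inner_apply:
  "inner3 (apply_local p K \<phi>) (apply_local p K \<chi>) =
    Mq K False False * Gam p \<phi> \<chi> False False + Mq K False True * Gam p \<phi> \<chi> False True +
    Mq K True False * Gam p \<phi> \<chi> True False + Mq K True True * Gam p \<phi> \<chi> True True"
  unfolding inner3_def apply_local_def Mq_def Gam_def
  by (simp add: sum_triple sum_bool algebra_simps)

lemma inner_Gam: "inner3 \<phi> \<chi> = Gam p \<phi> \<chi> False False + Gam p \<phi> \<chi> True True"
  unfolding inner3_def Gam_def by (simp add: sum_triple sum_bool algebra_simps)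

lemma sum_list_lin4: "(\<Sum>K\<leftarrow>Ks. f1 K * c1 + f2 K * c2 + f3 K * c3 + f4 K * (c4::complex)) =
   (\<Sum>K\<leftarrow>Ks. f1 K) * c1 + (\<Sum>K\<leftarrow>Ks. f2 K) * c2 + (\<Sum>K\<leftarrow>Ks. f3 K) * c3 + (\<Sum>K\<leftarrow>Ks. f4 K) * c4"
  by (induction Ks) (simp_all add: algebra_simps)

lemma complete_Mq: "complete_meas Ks \<Longrightarrow> (\<Sum>K\<leftarrow>Ks. Mq K a c) = (if a = c then 1 else 0)"
  unfolding complete_meas_def Mq_def by simp

lemma inner_split:
  assumes "complete_meas Ks"
  shows "inner3 \<phi> \<chi> = (\<Sum>K\<leftarrow>Ks. inner3 (apply_local p K \<phi>) (apply_local p K \<chi>))"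
  unfolding inner_apply sum_list_lin4 using complete_Mq[OF assms] by (simp add: inner_Gam[of _ _ p])

lemma sum_list_zero: "(\<And>x. x \<in> set xs \<Longrightarrow> f x = (0::complex)) \<Longrightarrow> sum_list (map f xs) = 0"
  by (induction xs) auto

lemma orth:
  assumes "wf_proto P"
  shows "correct \<phi> i P \<Longrightarrow> correct \<chi> j P \<Longrightarrow> i \<noteq> j \<Longrightarrow> inner3 \<phi> \<chi> = 0"
  using assms
proof (induction P arbitrary: \<phi> \<chi> rule: wf_proto.induct)
  case (1 g)
  then show ?case
    by (auto elim!: correct.cases simp: inner3_def)
next
  case (2 p ms)
  from 2(4) have c1: "\<forall>(K, q)\<in>set ms. correct (apply_local p K \<phi>) i q" by (auto elim: correct.cases)
  from 2(5) have c2: "\<forall>(K, q)\<in>set ms. correct (apply_local p K \<chi>) j q" by (auto elim: correct.cases)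
  have "inner3 \<phi> \<chi> = (\<Sum>K\<leftarrow>map fst ms. inner3 (apply_local p K \<phi>) (apply_local p K \<chi>))"
    by (rule inner_split[OF 2(2)])
  also have "\<dots> = (\<Sum>Kq\<leftarrow>ms. inner3 (apply_local p (fst Kq) \<phi>) (apply_local p (fst Kq) \<chi>))"
    by (simp add: comp_def)
  also have "\<dots> = 0"
    by (rule sum_list_zero) (use 2(3) c1 c2 2(6) in fastforce)
  finally show ?case .
qed

section \<open>Two-qubit algebra\<close>

definition ip1 :: "(bool \<Rightarrow> complex) \<Rightarrow> (bool \<Rightarrow> complex) \<Rightarrow> complex" where
  "ip1 x y = cnj (x False) * y False + cnj (x True) * y True"

definition ip2 :: "(bool \<Rightarrow> bool \<Rightarrow> complex) \<Rightarrow> (bool \<Rightarrow> bool \<Rightarrow> complex) \<Rightarrow> complex" where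
  "ip2 \<chi> \<omega> = cnj (\<chi> False False) * \<omega> False False + cnj (\<chi> False True) * \<omega> False True
     + cnj (\<chi> True False) * \<omega> True False + cnj (\<chi> True True) * \<omega> True True"

definition det2 :: "qop \<Rightarrow> complex" where
  "det2 K = K False False * K True True - K False True * K True False"

definition mv :: "qop \<Rightarrow> (bool \<Rightarrow> complex) \<Rightarrow> bool \<Rightarrow> complex" where
  "mv K x a = K a False * x False + K a True * x True"

definition lq :: "qop \<Rightarrow> (bool \<Rightarrow> bool \<Rightarrow> complex) \<Rightarrow> bool \<Rightarrow> bool \<Rightarrow> complex" where
  "lq K \<chi> b c = K b False * \<chi> False c + K b True * \<chi> True c"

definition rq :: "qop \<Rightarrow> (bool \<Rightarrow> bool \<Rightarrow> complex) \<Rightarrow> bool \<Rightarrow> bool \<Rightarrow> complex" where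
  "rq K \<chi> b c = K c False * \<chi> b False + K c True * \<chi> b True"

definition T2 :: "qop \<Rightarrow> qop \<Rightarrow> (bool \<Rightarrow> bool \<Rightarrow> complex) \<Rightarrow> bool \<Rightarrow> bool \<Rightarrow> complex" where
  "T2 B C \<eta> = lq B (rq C \<eta>)"

definition kil :: "(bool \<Rightarrow> complex) \<Rightarrow> (bool \<Rightarrow> bool \<Rightarrow> complex) \<Rightarrow> bool \<Rightarrow> complex" where
  "kil r \<chi> c = r False * \<chi> False c + r True * \<chi> True c"

definition rowm :: "(bool \<Rightarrow> complex) \<Rightarrow> qop \<Rightarrow> bool \<Rightarrow> complex" where
  "rowm r B c = r False * B False c + r True * B True c"

definition mm :: "qop \<Rightarrow> qop \<Rightarrow> qop" where
  "mm K B a c = K a False * B False c + K a True * B True c"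

definition outer :: "(bool \<Rightarrow> complex) \<Rightarrow> (bool \<Rightarrow> complex) \<Rightarrow> qop" where
  "outer z r a b = z a * r b"

definition tr :: "(bool \<Rightarrow> bool \<Rightarrow> complex) \<Rightarrow> bool \<Rightarrow> bool \<Rightarrow> complex" where
  "tr \<chi> b c = \<chi> c b"

definition det3 :: "complex \<Rightarrow> complex \<Rightarrow> complex \<Rightarrow> complex \<Rightarrow> complex \<Rightarrow> complex \<Rightarrow> complex \<Rightarrow> complex \<Rightarrow> complex \<Rightarrow> complex" where
  "det3 a0 b0 c0 a1 b1 c1 a2 b2 c2 = a0 * (b1 * c2 - b2 * c1) - b0 * (a1 * c2 - a2 * c1) + c0 * (a1 * b2 - a2 * b1)"

definition deteta :: "(nat \<Rightarrow> bool \<Rightarrow> bool \<Rightarrow> complex) \<Rightarrow> complex" where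
  "deteta \<eta> = det3 (\<eta> 0 False False) (\<eta> 0 True False) (\<eta> 0 False True)
                    (\<eta> 1 False False) (\<eta> 1 True False) (\<eta> 1 False True)
                    (\<eta> 2 False False) (\<eta> 2 True False) (\<eta> 2 False True)"

lemma cnj_sq_zero: "cnj a * a + cnj b * b = 0 \<Longrightarrow> a = 0 \<and> b = (0::complex)"
proof -
  assume h: "cnj a * a + cnj b * b = 0"
  have ea: "cnj a * a = of_real ((cmod a)^2)"
    using complex_norm_square[of a] by (simp only: mult.commute)
  have eb: "cnj b * b = of_real ((cmod b)^2)"
    using complex_norm_square[of b] by (simp only: mult.commute)
  have "of_real ((cmod a)^2 + (cmod b)^2) = (0::complex)" using h ea eb by simp
  then have "(cmod a)^2 + (cmod b)^2 = 0" by (simp only: of_real_eq_0_iff)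
  then have "(cmod a)^2 = 0 \<and> (cmod b)^2 = 0"
    using zero_le_power2[of "cmod a"] zero_le_power2[of "cmod b"] by linarith
  then show ?thesis by simp
qed

lemma ip1_self_zero: "ip1 x x = 0 \<Longrightarrow> x = (\<lambda>_. 0)"
proof -
  assume "ip1 x x = 0"
  then have "x False = 0 \<and> x True = 0" unfolding ip1_def by (rule cnj_sq_zero)
  then show ?thesis by (auto simp: fun_eq_iff all_bool_eq)
qed

lemma three_orth:
  assumes "ip1 u v = 0" "ip1 u w = 0" "ip1 v w = 0"
  shows "u = (\<lambda>_. 0) \<or> v = (\<lambda>_. 0) \<or> w = (\<lambda>_. 0)"
proof (rule ccontr)
  assume nz: "\<not> (u = (\<lambda>_. 0) \<or> v = (\<lambda>_. 0) \<or> w = (\<lambda>_. 0))"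
  have e1: "cnj (u False) * v False + cnj (u True) * v True = 0" using assms(1) by (simp add: ip1_def)
  have e2: "cnj (u False) * w False + cnj (u True) * w True = 0" using assms(2) by (simp add: ip1_def)
  have e3: "cnj (v False) * w False + cnj (v True) * w True = 0" using assms(3) by (simp add: ip1_def)
  have d1: "cnj (u False) * (v False * w True - v True * w False) =
     w True * (cnj (u False) * v False + cnj (u True) * v True) - v True * (cnj (u False) * w False + cnj (u True) * w True)"
    by (simp add: algebra_simps)
  have d2: "cnj (u True) * (v False * w True - v True * w False) =
     v False * (cnj (u False) * w False + cnj (u True) * w True) - w False * (cnj (u False) * v False + cnj (u True) * v True)"
    by (simp add: algebra_simps)
  have "u False \<noteq> 0 \<or> u True \<noteq> 0"
  proof (rule ccontr)
    assume "\<not> (u False \<noteq> 0 \<or> u True \<noteq> 0)"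
    then have "u = (\<lambda>_. 0)" by (auto simp: fun_eq_iff all_bool_eq)
    with nz show False by simp
  qed
  moreover have "cnj (u False) * (v False * w True - v True * w False) = 0" using d1 e1 e2 by simp
  moreover have "cnj (u True) * (v False * w True - v True * w False) = 0" using d2 e1 e2 by simp
  ultimately have dz: "v False * w True = v True * w False" by auto
  have n1: "(cnj (v False) * v False + cnj (v True) * v True) * w False =
      v False * (cnj (v False) * w False + cnj (v True) * w True) + cnj (v True) * (v True * w False - v False * w True)"
    by (simp add: algebra_simps)
  have n2: "(cnj (v False) * v False + cnj (v True) * v True) * w True =
      v True * (cnj (v False) * w False + cnj (v True) * w True) + cnj (v False) * (v False * w True - v True * w False)"
    by (simp add: algebra_simps)
  have vnz: "cnj (v False) * v False + cnj (v True) * v True \<noteq> 0"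
  proof
    assume "cnj (v False) * v False + cnj (v True) * v True = 0"
    then have "v False = 0" "v True = 0" using cnj_sq_zero by blast+
    then have "v = (\<lambda>_. 0)" by (auto simp: fun_eq_iff all_bool_eq)
    with nz show False by simp
  qed
  have m1: "(cnj (v False) * v False + cnj (v True) * v True) * w False = 0"
    using n1 e3 dz by simp
  have m2: "(cnj (v False) * v False + cnj (v True) * v True) * w True = 0"
    using n2 e3 dz by simp
  from m1 m2 vnz have "w False = 0" "w True = 0" by simp_all
  then have "w = (\<lambda>_. 0)" by (auto simp: fun_eq_iff all_bool_eq)
  with nz show False by simp
qed

lemma cnj_sq_zero4: "cnj a * a + cnj b * b + cnj c * c + cnj d * d = 0 \<Longrightarrow> a = 0 \<and> b = 0 \<and> c = 0 \<and> d = (0::complex)"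
proof -
  assume h: "cnj a * a + cnj b * b + cnj c * c + cnj d * d = 0"
  have e: "\<And>z. cnj z * z = of_real ((cmod z)^2)"
    using complex_norm_square by (simp only: mult.commute)
  have "of_real ((cmod a)^2 + (cmod b)^2 + (cmod c)^2 + (cmod d)^2) = (0::complex)" using h by (simp add: e)
  then have "(cmod a)^2 + (cmod b)^2 + (cmod c)^2 + (cmod d)^2 = 0" by (simp only: of_real_eq_0_iff)
  then have "(cmod a)^2 = 0 \<and> (cmod b)^2 = 0 \<and> (cmod c)^2 = 0 \<and> (cmod d)^2 = 0"
    using zero_le_power2[of "cmod a"] zero_le_power2[of "cmod b"]
          zero_le_power2[of "cmod c"] zero_le_power2[of "cmod d"] by linarith
  then show ?thesis by simp
qed

lemma ip2_self_zero: "ip2 x x = 0 \<Longrightarrow> x = (\<lambda>_ _. 0)"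
proof -
  assume "ip2 x x = 0"
  then have "x False False = 0 \<and> x False True = 0 \<and> x True False = 0 \<and> x True True = 0"
    unfolding ip2_def by (rule cnj_sq_zero4)
  then show ?thesis by (auto simp: fun_eq_iff all_bool_eq)
qed

lemma inner3_self_zero: "inner3 \<phi> \<phi> = 0 \<Longrightarrow> \<phi> = (\<lambda>_. 0)"
proof -
  assume h: "inner3 \<phi> \<phi> = 0"
  have e: "\<And>z. cnj z * z = of_real ((cmod z)^2)"
    using complex_norm_square by (simp only: mult.commute)
  have "inner3 \<phi> \<phi> = of_real (\<Sum>x\<in>UNIV. (cmod (\<phi> x))^2)"
    unfolding inner3_def by (simp add: e)
  with h have "(\<Sum>x\<in>UNIV. (cmod (\<phi> x))^2) = 0" by (simp only: of_real_eq_0_iff)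
  then have "\<forall>x\<in>UNIV. (cmod (\<phi> x))^2 = 0"
    by (subst sum_nonneg_eq_0_iff[symmetric]) auto
  then show ?thesis by auto
qed

section \<open>States with one decoupled party\<close>

definition st :: "nat \<Rightarrow> (bool \<Rightarrow> complex) \<Rightarrow> (bool \<Rightarrow> bool \<Rightarrow> complex) \<Rightarrow> state" where
  "st p x \<chi> = (\<lambda>(a,b,c). if p = 0 then x a * \<chi> b c else if p = 1 then x b * \<chi> a c else x c * \<chi> a b)"

definition qq :: "nat \<Rightarrow> nat" where "qq p = (if p = 0 then 1 else 0)"
definition rr :: "nat \<Rightarrow> nat" where "rr p = (if p = 2 then 1 else 2)"

lemma party_cases: "p < 3 \<Longrightarrow> p' < 3 \<Longrightarrow> p' = p \<or> p' = qq p \<or> p' = rr p"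
  unfolding qq_def rr_def by auto

lemma qq_lt: "qq p < 3" and rr_lt: "rr p < 3" unfolding qq_def rr_def by auto

lemma p3_cases: "(p::nat) < 3 \<Longrightarrow> p = 0 \<or> p = 1 \<or> p = 2" by auto

lemma st_p: "p < 3 \<Longrightarrow> apply_local p K (st p x \<chi>) = st p (mv K x) \<chi>"
  by (drule p3_cases) (auto simp: apply_local_def st_def mv_def fun_eq_iff sum_bool algebra_simps)

lemma st_q: "p < 3 \<Longrightarrow> apply_local (qq p) K (st p x \<chi>) = st p x (lq K \<chi>)"
  by (drule p3_cases) (auto simp: apply_local_def st_def lq_def qq_def fun_eq_iff sum_bool algebra_simps)

lemma st_r: "p < 3 \<Longrightarrow> apply_local (rr p) K (st p x \<chi>) = st p x (rq K \<chi>)"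
  by (drule p3_cases) (auto simp: apply_local_def st_def rq_def rr_def fun_eq_iff sum_bool algebra_simps)

lemma inner_st: "p < 3 \<Longrightarrow> inner3 (st p x \<chi>) (st p y \<omega>) = ip1 x y * ip2 \<chi> \<omega>"
  by (drule p3_cases) (auto simp: inner3_def st_def ip1_def ip2_def sum_triple algebra_simps)

lemma st_nonzero: "p < 3 \<Longrightarrow> x \<noteq> (\<lambda>_. 0) \<Longrightarrow> \<chi> \<noteq> (\<lambda>_ _. 0) \<Longrightarrow> st p x \<chi> \<noteq> (\<lambda>_. 0)"
proof
  assume p: "p < 3" and x: "x \<noteq> (\<lambda>_. 0)" and c: "\<chi> \<noteq> (\<lambda>_ _. 0)" and z: "st p x \<chi> = (\<lambda>_. 0)"
  have "ip1 x x * ip2 \<chi> \<chi> = 0" using inner_st[OF p, of x \<chi> x \<chi>] z by (simp add: inner3_def)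
  then have "ip1 x x = 0 \<or> ip2 \<chi> \<chi> = 0" by simp
  then show False using x c ip1_self_zero ip2_self_zero by blast
qed

lemma st_zero: "st p (\<lambda>_. 0) \<chi> = (\<lambda>_. 0)"
  by (auto simp: st_def fun_eq_iff)

section \<open>Matrix algebra on a qubit\<close>

lemma lq_lq: "lq K (lq B \<chi>) = lq (mm K B) \<chi>"
  by (simp add: lq_def mm_def fun_eq_iff algebra_simps)
lemma rq_rq: "rq K (rq B \<chi>) = rq (mm K B) \<chi>"
  by (simp add: rq_def mm_def fun_eq_iff algebra_simps)
lemma lq_rq: "lq K (rq C \<chi>) = rq C (lq K \<chi>)"
  by (simp add: rq_def lq_def fun_eq_iff algebra_simps)
lemma mv_mv: "mv K (mv A x) = mv (mm K A) x"
  by (simp add: mv_def mm_def fun_eq_iff algebra_simps)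
lemma det2_mm: "det2 (mm K B) = det2 K * det2 B"
  by (simp add: det2_def mm_def algebra_simps)

lemma tr_lq: "tr (lq K \<chi>) = rq K (tr \<chi>)" by (simp add: tr_def lq_def rq_def fun_eq_iff)
lemma tr_rq: "tr (rq K \<chi>) = lq K (tr \<chi>)" by (simp add: tr_def lq_def rq_def fun_eq_iff)
lemma tr_tr: "tr (tr \<chi>) = \<chi>" by (simp add: tr_def fun_eq_iff)
lemma ip2_tr: "ip2 (tr \<chi>) (tr \<omega>) = ip2 \<chi> \<omega>" by (simp add: tr_def ip2_def algebra_simps)

lemma mv_inj: "det2 B \<noteq> 0 \<Longrightarrow> mv B x = (\<lambda>_. 0) \<Longrightarrow> x = (\<lambda>_. 0)"
proof -
  assume d: "det2 B \<noteq> 0" and h: "mv B x = (\<lambda>_. 0)"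
  have e1: "B False False * x False + B False True * x True = 0" using h by (simp add: mv_def fun_eq_iff)
  have e2: "B True False * x False + B True True * x True = 0" using h by (simp add: mv_def fun_eq_iff)
  have "det2 B * x False = B True True * (B False False * x False + B False True * x True)
        - B False True * (B True False * x False + B True True * x True)"
    by (simp add: det2_def algebra_simps)
  then have a: "det2 B * x False = 0" using e1 e2 by simp
  have "det2 B * x True = B False False * (B True False * x False + B True True * x True)
        - B True False * (B False False * x False + B False True * x True)"
    by (simp add: det2_def algebra_simps)
  then have b: "det2 B * x True = 0" using e1 e2 by simp
  from a b d show ?thesis by (auto simp: fun_eq_iff all_bool_eq)
qed

lemma lq_inj: "det2 B \<noteq> 0 \<Longrightarrow> lq B \<chi> = (\<lambda>_ _. 0) \<Longrightarrow> \<chi> = (\<lambda>_ _. 0)"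
proof -
  assume d: "det2 B \<noteq> 0" and h: "lq B \<chi> = (\<lambda>_ _. 0)"
  have "\<And>c. mv B (\<lambda>b. \<chi> b c) = (\<lambda>_. 0)" using h by (simp add: lq_def mv_def fun_eq_iff)
  then have "\<And>c. (\<lambda>b. \<chi> b c) = (\<lambda>_. 0)" using mv_inj[OF d] by blast
  then show ?thesis by (simp add: fun_eq_iff)
qed

lemma rq_inj: "det2 B \<noteq> 0 \<Longrightarrow> rq B \<chi> = (\<lambda>_ _. 0) \<Longrightarrow> \<chi> = (\<lambda>_ _. 0)"
proof -
  assume d: "det2 B \<noteq> 0" and h: "rq B \<chi> = (\<lambda>_ _. 0)"
  have "\<And>b. mv B (\<chi> b) = (\<lambda>_. 0)" using h by (simp add: rq_def mv_def fun_eq_iff)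
  then have "\<And>b. \<chi> b = (\<lambda>_. 0)" using mv_inj[OF d] by blast
  then show ?thesis by (simp add: fun_eq_iff)
qed

lemma singular_outer: "det2 K = 0 \<Longrightarrow> \<exists>z r. K = outer z r"
proof -
  assume d: "det2 K = 0"
  show ?thesis
  proof (cases "K False False \<noteq> 0")
    case True
    let ?l = "K False True / K False False"
    have "K = outer (\<lambda>a. K a False) (\<lambda>b. if b then ?l else 1)"
      using d True by (auto simp: outer_def fun_eq_iff det2_def field_simps all_bool_eq)
    then show ?thesis by blast
  next
    case f1: False
    show ?thesis
    proof (cases "K True False \<noteq> 0")
      case True
      let ?l = "K True True / K True False"
      have "K = outer (\<lambda>a. K a False) (\<lambda>b. if b then ?l else 1)"
        using d True f1 by (auto simp: outer_def fun_eq_iff det2_def field_simps all_bool_eq)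
      then show ?thesis by blast
    next
      case False
      have "K = outer (\<lambda>a. K a True) (\<lambda>b. if b then 1 else 0)"
        using False f1 by (auto simp: outer_def fun_eq_iff all_bool_eq)
      then show ?thesis by blast
    qed
  qed
qed

lemma lq_outer: "lq (outer z r) \<chi> = (\<lambda>b c. z b * kil r \<chi> c)"
  by (simp add: lq_def outer_def kil_def fun_eq_iff algebra_simps)
lemma kil_lq: "kil r (lq B \<chi>) = kil (rowm r B) \<chi>"
  by (simp add: lq_def rowm_def kil_def fun_eq_iff algebra_simps)
lemma kil_rq: "kil r (rq C \<chi>) = mv C (kil r \<chi>)"
  by (simp add: rq_def mv_def kil_def fun_eq_iff algebra_simps)
lemma ip2_prod: "ip2 (\<lambda>b c. z b * u c) (\<lambda>b c. z b * v c) = ip1 z z * ip1 u v"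
  by (simp add: ip2_def ip1_def algebra_simps)
lemma Mq_outer: "Mq (outer z r) a c = ip1 z z * (cnj (r a) * r c)"
  by (simp add: Mq_def outer_def ip1_def sum_bool algebra_simps)

lemma sum_list_lin2: "(\<Sum>x\<leftarrow>xs. f x * c1 + g x * (c2::complex)) = (\<Sum>x\<leftarrow>xs. f x) * c1 + (\<Sum>x\<leftarrow>xs. g x) * c2"
  by (induction xs) (simp_all add: algebra_simps)

lemma sum_list_zero': "(\<And>x. x \<in> set xs \<Longrightarrow> f x = (0::complex)) \<Longrightarrow> (\<Sum>x\<leftarrow>xs. f x) = 0"
  by (induction xs) auto

lemma sum_list_nonzero: "(\<Sum>x\<leftarrow>xs. f x) \<noteq> (0::complex) \<Longrightarrow> \<exists>x\<in>set xs. f x \<noteq> 0"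
proof (rule ccontr)
  assume a: "(\<Sum>x\<leftarrow>xs. f x) \<noteq> 0" and "\<not> (\<exists>x\<in>set xs. f x \<noteq> 0)"
  then have "\<And>x. x \<in> set xs \<Longrightarrow> f x = 0" by simp
  then have "(\<Sum>x\<leftarrow>xs. f x) = 0" by (rule sum_list_zero')
  with a show False by simp
qed

lemma det3_c01: "det3 a0 b0 0 a1 b1 0 a2 b2 c2 = c2 * (a0*b1 - a1*b0)"
  by (simp add: det3_def algebra_simps)
lemma det3_c02: "det3 a0 b0 0 a1 b1 c1 a2 b2 0 = - c1 * (a0*b2 - a2*b0)"
  by (simp add: det3_def algebra_simps)
lemma det3_c12: "det3 a0 b0 c0 a1 b1 0 a2 b2 0 = c0 * (a1*b2 - a2*b1)"
  by (simp add: det3_def algebra_simps)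

lemma deteta_pair:
  assumes D: "deteta \<eta> \<noteq> 0" and ij: "i < 3" "j < 3" "i \<noteq> j"
    and z: "\<eta> i False True = 0" "\<eta> j False True = 0"
  shows "\<eta> i False False * \<eta> j True False - \<eta> j False False * \<eta> i True False \<noteq> 0"
proof
  assume h: "\<eta> i False False * \<eta> j True False - \<eta> j False False * \<eta> i True False = 0"
  have h': "\<eta> j False False * \<eta> i True False - \<eta> i False False * \<eta> j True False = 0"
    using h by (simp add: algebra_simps)
  from ij have "(i = 0 \<and> j = 1) \<or> (i = 1 \<and> j = 0) \<or> (i = 0 \<and> j = 2) \<or> (i = 2 \<and> j = 0) \<or> (i = 1 \<and> j = 2) \<or> (i = 2 \<and> j = 1)"
    by auto
  then have "deteta \<eta> = 0"
    using z h h' by (auto simp: deteta_def det3_c01 det3_c02 det3_c12)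
  with D show False by simp
qed

lemma deteta_row: "j < 3 \<Longrightarrow> \<eta> j False False = 0 \<Longrightarrow> \<eta> j True False = 0 \<Longrightarrow> \<eta> j False True = 0 \<Longrightarrow> deteta \<eta> = 0"
  by (drule p3_cases) (auto simp: deteta_def det3_def)

lemma LA1:
  assumes "ip1 v1 y = 0" "ip1 v2 y = 0" "v1 False * v2 True - v2 False * v1 True \<noteq> 0"
  shows "y = (\<lambda>_. 0)"
proof -
  have e1: "cnj (v1 False) * y False + cnj (v1 True) * y True = 0" using assms(1) by (simp add: ip1_def)
  have e2: "cnj (v2 False) * y False + cnj (v2 True) * y True = 0" using assms(2) by (simp add: ip1_def)
  have dn: "cnj (v1 False * v2 True - v2 False * v1 True) \<noteq> 0"
    by (subst complex_cnj_zero_iff) (rule assms(3))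
  have "cnj (v1 False * v2 True - v2 False * v1 True) * y False =
      cnj (v2 True) * (cnj (v1 False) * y False + cnj (v1 True) * y True)
    - cnj (v1 True) * (cnj (v2 False) * y False + cnj (v2 True) * y True)"
    by (simp add: algebra_simps)
  then have a: "cnj (v1 False * v2 True - v2 False * v1 True) * y False = 0" using e1 e2 by simp
  have "cnj (v1 False * v2 True - v2 False * v1 True) * y True =
      cnj (v1 False) * (cnj (v2 False) * y False + cnj (v2 True) * y True)
    - cnj (v2 False) * (cnj (v1 False) * y False + cnj (v1 True) * y True)"
    by (simp add: algebra_simps)
  then have b: "cnj (v1 False * v2 True - v2 False * v1 True) * y True = 0" using e1 e2 by simp
  from a b dn show ?thesis by (auto simp: fun_eq_iff all_bool_eq)
qed

lemma det2_Mq: "det2 (Mq B) = cnj (det2 B) * det2 B"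
  by (simp add: det2_def Mq_def sum_bool algebra_simps)

lemma Mq_col_nonzero: "det2 B \<noteq> 0 \<Longrightarrow> Mq B False False \<noteq> 0"
proof
  assume d: "det2 B \<noteq> 0" and h: "Mq B False False = 0"
  then have "cnj (B False False) * B False False + cnj (B True False) * B True False = 0"
    by (simp add: Mq_def sum_bool)
  then have "B False False = 0 \<and> B True False = 0" by (rule cnj_sq_zero)
  with d show False by (simp add: det2_def)
qed

lemma ip2_T2_decomp:
  assumes "\<eta>1 False True = 0" "\<eta>1 True True = 0"
  shows "ip2 (T2 B C \<eta>1) (T2 B C \<eta>) =
     ip1 (\<lambda>b. \<eta>1 b False) (mv (Mq B) (\<lambda>b. Mq C False False * \<eta> b False + Mq C False True * \<eta> b True))"
  using assms by (simp add: ip2_def ip1_def T2_def lq_def rq_def mv_def Mq_def sum_bool algebra_simps)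

lemma orth_prod:
  assumes z1: "\<eta>1 False True = 0" "\<eta>1 True True = 0" and z2: "\<eta>2 False True = 0" "\<eta>2 True True = 0"
    and z: "\<eta> True True = 0"
    and d: "\<eta>1 False False * \<eta>2 True False - \<eta>2 False False * \<eta>1 True False \<noteq> 0"
    and dB: "det2 B \<noteq> 0" and dC: "det2 C \<noteq> 0"
    and o1: "ip2 (T2 B C \<eta>1) (T2 B C \<eta>) = 0" and o2: "ip2 (T2 B C \<eta>2) (T2 B C \<eta>) = 0"
  shows "\<eta> True False = 0"
proof -
  let ?Z = "\<lambda>b. Mq C False False * \<eta> b False + Mq C False True * \<eta> b True"
  have "mv (Mq B) ?Z = (\<lambda>_. 0)"
    apply (rule LA1[of "\<lambda>b. \<eta>1 b False" _ "\<lambda>b. \<eta>2 b False"])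
    using o1 o2 ip2_T2_decomp[of \<eta>1 B C \<eta>, OF z1] ip2_T2_decomp[of \<eta>2 B C \<eta>, OF z2] d by simp_all
  then have "?Z = (\<lambda>_. 0)" using mv_inj[of "Mq B"] dB by (simp add: det2_Mq)
  then have "Mq C False False * \<eta> True False = 0" using z by (simp add: fun_eq_iff all_bool_eq)
  then show ?thesis using Mq_col_nonzero[OF dC] by simp
qed


lemma sum_kil: "(\<Sum>(w,\<rho>)\<leftarrow>ch. w * cnj (\<rho> a) * kil \<rho> \<eta> c) =
   (\<Sum>(w,\<rho>)\<leftarrow>ch. w * (cnj (\<rho> a) * \<rho> False)) * \<eta> False c + (\<Sum>(w,\<rho>)\<leftarrow>ch. w * (cnj (\<rho> a) * \<rho> True)) * \<eta> True c"
  by (induction ch) (auto simp: kil_def algebra_simps)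

lemma ip1_col: "ip1 (\<lambda>a. C a False * x) (\<lambda>a. C a False * y) = cnj x * y * Mq C False False"
  by (simp add: ip1_def Mq_def sum_bool algebra_simps)

lemma core2:
  fixes \<eta> :: "nat \<Rightarrow> bool \<Rightarrow> bool \<Rightarrow> complex" and ch :: "(complex \<times> (bool \<Rightarrow> complex)) list"
  assumes R: "\<And>j. j < 3 \<Longrightarrow> \<eta> j True True = 0"
    and D: "deteta \<eta> \<noteq> 0"
    and dB: "det2 B \<noteq> 0" and dC: "det2 C \<noteq> 0"
    and O: "\<And>i j. i < 3 \<Longrightarrow> j < 3 \<Longrightarrow> i \<noteq> j \<Longrightarrow> ip2 (T2 B C (\<eta> i)) (T2 B C (\<eta> j)) = 0"
    and S: "\<And>a c. (\<Sum>(w,\<rho>)\<leftarrow>ch. w * (cnj (\<rho> a) * \<rho> c)) = Mq B a c"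
    and CH: "\<And>w \<rho> i j. (w,\<rho>) \<in> set ch \<Longrightarrow> w \<noteq> 0 \<Longrightarrow> i < 3 \<Longrightarrow> j < 3 \<Longrightarrow> i \<noteq> j \<Longrightarrow>
               ip1 (mv C (kil \<rho> (\<eta> i))) (mv C (kil \<rho> (\<eta> j))) = 0"
  shows "\<And>j. j < 3 \<Longrightarrow> \<eta> j False True * \<eta> j True False = 0"
proof -
  have K0: "\<exists>j<3. kil \<rho> (\<eta> j) = (\<lambda>_. 0)" if "(w,\<rho>) \<in> set ch" "w \<noteq> 0" for w \<rho>
  proof -
    have o01: "ip1 (mv C (kil \<rho> (\<eta> 0))) (mv C (kil \<rho> (\<eta> 1))) = 0" by (rule CH[OF that]) simp_all
    have o02: "ip1 (mv C (kil \<rho> (\<eta> 0))) (mv C (kil \<rho> (\<eta> 2))) = 0" by (rule CH[OF that]) simp_all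
    have o12: "ip1 (mv C (kil \<rho> (\<eta> 1))) (mv C (kil \<rho> (\<eta> 2))) = 0" by (rule CH[OF that]) simp_all
    have "mv C (kil \<rho> (\<eta> 0)) = (\<lambda>_. 0) \<or> mv C (kil \<rho> (\<eta> 1)) = (\<lambda>_. 0) \<or> mv C (kil \<rho> (\<eta> 2)) = (\<lambda>_. 0)"
      by (rule three_orth[OF o01 o02 o12])
    then show ?thesis
    proof (elim disjE)
      assume "mv C (kil \<rho> (\<eta> 0)) = (\<lambda>_. 0)"
      then have "kil \<rho> (\<eta> 0) = (\<lambda>_. 0)" by (rule mv_inj[OF dC])
      then show ?thesis by (intro exI[of _ 0]) simp
    next
      assume "mv C (kil \<rho> (\<eta> 1)) = (\<lambda>_. 0)"
      then have "kil \<rho> (\<eta> 1) = (\<lambda>_. 0)" by (rule mv_inj[OF dC])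
      then show ?thesis by (intro exI[of _ 1]) simp
    next
      assume "mv C (kil \<rho> (\<eta> 2)) = (\<lambda>_. 0)"
      then have "kil \<rho> (\<eta> 2) = (\<lambda>_. 0)" by (rule mv_inj[OF dC])
      then show ?thesis by (intro exI[of _ 2]) simp
    qed
  qed
  have K1: "\<eta> j False True = 0" if "\<rho> False \<noteq> 0" "kil \<rho> (\<eta> j) = (\<lambda>_. 0)" "j < 3" for \<rho> j
  proof -
    have "kil \<rho> (\<eta> j) True = 0" using that(2) by simp
    then have "\<rho> False * \<eta> j False True = 0" using R[OF that(3)] by (simp add: kil_def)
    then show ?thesis using that(1) by simp
  qed
  have K2: "\<eta> i True False = 0 \<or> \<eta> j True False = 0"
    if "(w,\<rho>) \<in> set ch" "w \<noteq> 0" "\<rho> False = 0" "\<rho> True \<noteq> 0" "i < 3" "j < 3" "i \<noteq> j" for w \<rho> i j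
  proof -
    have e: "\<And>k. k < 3 \<Longrightarrow> mv C (kil \<rho> (\<eta> k)) = (\<lambda>a. C a False * (\<rho> True * \<eta> k True False))"
      using R that(3) by (auto simp: mv_def kil_def fun_eq_iff)
    have "cnj (\<rho> True * \<eta> i True False) * (\<rho> True * \<eta> j True False) * Mq C False False = 0"
      using CH[OF that(1,2,5,6,7)] e[OF that(5)] e[OF that(6)] ip1_col by metis
    then show ?thesis using that(4) Mq_col_nonzero[OF dC] by simp
  qed
  have "Mq B False False \<noteq> 0" by (rule Mq_col_nonzero[OF dB])
  then have "(\<Sum>(w,\<rho>)\<leftarrow>ch. w * (cnj (\<rho> False) * \<rho> False)) \<noteq> 0" using S by simp
  then obtain x where "x \<in> set ch" "(\<lambda>(w,\<rho>). w * (cnj (\<rho> False) * \<rho> False)) x \<noteq> 0"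
    using sum_list_nonzero by blast
  moreover obtain w0 \<rho>0 where "x = (w0,\<rho>0)" by (rule prod.exhaust)
  ultimately have w0: "(w0,\<rho>0) \<in> set ch" "w0 \<noteq> 0" "\<rho>0 False \<noteq> 0" by auto
  obtain j3 where j3: "j3 < 3" "kil \<rho>0 (\<eta> j3) = (\<lambda>_. 0)" using K0[OF w0(1,2)] by blast
  have j3ft: "\<eta> j3 False True = 0" using K1[OF w0(3) j3(2) j3(1)] .
  fix j :: nat assume j: "j < 3"
  show "\<eta> j False True * \<eta> j True False = 0"
  proof (cases "\<exists>(w,\<rho>)\<in>set ch. w \<noteq> 0 \<and> \<rho> False = 0 \<and> \<rho> True \<noteq> 0")
    case True
    then obtain w \<rho> where wr: "(w,\<rho>) \<in> set ch" "w \<noteq> 0" "\<rho> False = 0" "\<rho> True \<noteq> 0" by blast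
    show ?thesis
    proof (cases "\<eta> j True False = 0 \<or> j = j3")
      case True
      then show ?thesis using j3ft by auto
    next
      case False
      then have "\<eta> j3 True False = 0" using K2[OF wr j j3(1)] by auto
      moreover have "kil \<rho>0 (\<eta> j3) False = 0" using j3(2) by simp
      ultimately have "\<rho>0 False * \<eta> j3 False False = 0" by (simp add: kil_def)
      then have "\<eta> j3 False False = 0" using w0(3) by simp
      then have "deteta \<eta> = 0" using deteta_row[OF j3(1)] j3ft \<open>\<eta> j3 True False = 0\<close> by simp
      with D show ?thesis by simp
    qed
  next
    case False
    then have nb: "\<And>w \<rho>. (w,\<rho>) \<in> set ch \<Longrightarrow> w \<noteq> 0 \<Longrightarrow> \<rho> False = 0 \<Longrightarrow> \<rho> True = 0" by blast
    show ?thesis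
    proof (cases "\<exists>j1<3. \<exists>j2<3. j1 \<noteq> j2 \<and> \<eta> j1 False True = 0 \<and> \<eta> j2 False True = 0")
      case True
      then obtain j1 j2 where jj: "j1 < 3" "j2 < 3" "j1 \<noteq> j2" "\<eta> j1 False True = 0" "\<eta> j2 False True = 0" by blast
      show ?thesis
      proof (cases "j = j1 \<or> j = j2")
        case True then show ?thesis using jj by auto
      next
        case False
        have "\<eta> j True False = 0"
          by (rule orth_prod[of "\<eta> j1" "\<eta> j2" "\<eta> j" B C])
             (use jj R j False dB dC O deteta_pair[OF D jj(1,2,3,4,5)] in auto)
        then show ?thesis by simp
      qed
    next
      case False
      then have uniq: "\<And>k. k < 3 \<Longrightarrow> \<eta> k False True = 0 \<Longrightarrow> k = j3" using j3(1) j3ft by blast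
      have allk: "w = 0 \<or> kil \<rho> (\<eta> j3) = (\<lambda>_. 0)" if wr: "(w,\<rho>) \<in> set ch" for w \<rho>
      proof (cases "w = 0")
        case False
        show ?thesis
        proof (cases "\<rho> False = 0")
          case True
          then have "\<rho> True = 0" using nb[OF wr False] by simp
          then show ?thesis using True by (auto simp: kil_def fun_eq_iff)
        next
          case nz: False
          obtain k where k: "k < 3" "kil \<rho> (\<eta> k) = (\<lambda>_. 0)" using K0[OF wr False] by blast
          then have "k = j3" using uniq K1[OF nz k(2) k(1)] by blast
          then show ?thesis using k by simp
        qed
      qed simp
      have zero: "\<eta> j3 b c = 0" for b c
      proof -
        have "(\<Sum>(w,\<rho>)\<leftarrow>ch. w * cnj (\<rho> a) * kil \<rho> (\<eta> j3) c) = 0" for a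
        proof (rule sum_list_zero')
          fix x assume "x \<in> set ch"
          moreover obtain w \<rho> where "x = (w,\<rho>)" by (rule prod.exhaust)
          ultimately have "w = 0 \<or> kil \<rho> (\<eta> j3) = (\<lambda>_. 0)" using allk by simp
          then show "(\<lambda>(w,\<rho>). w * cnj (\<rho> a) * kil \<rho> (\<eta> j3) c) x = 0"
            using \<open>x = (w,\<rho>)\<close> by auto
        qed
        then have "Mq B a False * \<eta> j3 False c + Mq B a True * \<eta> j3 True c = 0" for a
          using sum_kil[of a "\<eta> j3" c ch] S by simp
        then have "mv (Mq B) (\<lambda>b. \<eta> j3 b c) = (\<lambda>_. 0)" by (simp add: mv_def fun_eq_iff)
        then have "(\<lambda>b. \<eta> j3 b c) = (\<lambda>_. 0)" using mv_inj[of "Mq B"] dB by (simp add: det2_Mq)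
        then show ?thesis by (simp add: fun_eq_iff)
      qed
      have "deteta \<eta> = 0" by (rule deteta_row[OF j3(1)]) (simp_all add: zero)
      with D show ?thesis by simp
    qed
  qed
qed

definition zf :: "qop \<Rightarrow> bool \<Rightarrow> complex" where "zf K = (SOME z. \<exists>r. K = outer z r)"
definition rf :: "qop \<Rightarrow> bool \<Rightarrow> complex" where "rf K = (SOME r. K = outer (zf K) r)"

lemma outer_zf_rf: "det2 K = 0 \<Longrightarrow> K = outer (zf K) (rf K)"
proof -
  assume "det2 K = 0"
  then have "\<exists>z r. K = outer z r" by (rule singular_outer)
  then have "\<exists>r. K = outer (zf K) r" unfolding zf_def by (rule someI_ex)
  then show ?thesis unfolding rf_def by (rule someI_ex)
qed

lemma S_outer: "ip1 z z * (cnj (rowm r B a) * rowm r B c) =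
   Mq (outer z r) False False * (cnj (B False a) * B False c) + Mq (outer z r) False True * (cnj (B False a) * B True c)
 + Mq (outer z r) True False * (cnj (B True a) * B False c) + Mq (outer z r) True True * (cnj (B True a) * B True c)"
  by (simp add: Mq_outer rowm_def algebra_simps)

lemma sing_q:
  fixes \<eta> :: "nat \<Rightarrow> bool \<Rightarrow> bool \<Rightarrow> complex"
  assumes R: "\<And>j. j < 3 \<Longrightarrow> \<eta> j True True = 0"
    and D: "deteta \<eta> \<noteq> 0"
    and dB: "det2 B \<noteq> 0" and dC: "det2 C \<noteq> 0"
    and O: "\<And>i j. i < 3 \<Longrightarrow> j < 3 \<Longrightarrow> i \<noteq> j \<Longrightarrow> ip2 (T2 B C (\<eta> i)) (T2 B C (\<eta> j)) = 0"
    and cm: "complete_meas Ks"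
    and sg: "\<And>K. K \<in> set Ks \<Longrightarrow> det2 K = 0"
    and CO: "\<And>K i j. K \<in> set Ks \<Longrightarrow> i < 3 \<Longrightarrow> j < 3 \<Longrightarrow> i \<noteq> j \<Longrightarrow>
               ip2 (lq K (T2 B C (\<eta> i))) (lq K (T2 B C (\<eta> j))) = 0"
  shows "\<And>j. j < 3 \<Longrightarrow> \<eta> j False True * \<eta> j True False = 0"
proof -
  define ch where "ch = map (\<lambda>K. (ip1 (zf K) (zf K), rowm (rf K) B)) Ks"
  have S: "(\<Sum>(w,\<rho>)\<leftarrow>ch. w * (cnj (\<rho> a) * \<rho> c)) = Mq B a c" for a c
  proof -
    have "(\<Sum>(w,\<rho>)\<leftarrow>ch. w * (cnj (\<rho> a) * \<rho> c)) =
       (\<Sum>K\<leftarrow>Ks. ip1 (zf K) (zf K) * (cnj (rowm (rf K) B a) * rowm (rf K) B c))"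
      by (simp add: ch_def comp_def)
    also have "\<dots> = (\<Sum>K\<leftarrow>Ks. Mq K False False * (cnj (B False a) * B False c) + Mq K False True * (cnj (B False a) * B True c)
          + Mq K True False * (cnj (B True a) * B False c) + Mq K True True * (cnj (B True a) * B True c))"
    proof (rule arg_cong[where f = sum_list], rule map_cong[OF refl])
      fix K assume "K \<in> set Ks"
      then have "K = outer (zf K) (rf K)" using sg outer_zf_rf by blast
      then show "ip1 (zf K) (zf K) * (cnj (rowm (rf K) B a) * rowm (rf K) B c) =
        Mq K False False * (cnj (B False a) * B False c) + Mq K False True * (cnj (B False a) * B True c)
          + Mq K True False * (cnj (B True a) * B False c) + Mq K True True * (cnj (B True a) * B True c)"
        using S_outer[of "zf K" "rf K" B a c] by simp
    qed
    also have "\<dots> = Mq B a c"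
      unfolding sum_list_lin4 complete_Mq[OF cm] by (simp add: Mq_def sum_bool)
    finally show ?thesis .
  qed
  have CH: "ip1 (mv C (kil \<rho> (\<eta> i))) (mv C (kil \<rho> (\<eta> j))) = 0"
    if wr: "(w,\<rho>) \<in> set ch" "w \<noteq> 0" "i < 3" "j < 3" "i \<noteq> j" for w \<rho> i j
  proof -
    obtain K where K: "K \<in> set Ks" "w = ip1 (zf K) (zf K)" "\<rho> = rowm (rf K) B"
      using wr(1) by (auto simp: ch_def)
    have Ke: "K = outer (zf K) (rf K)" using sg[OF K(1)] outer_zf_rf by blast
    have e: "lq K (T2 B C (\<eta> k)) = (\<lambda>b c. zf K b * mv C (kil \<rho> (\<eta> k)) c)" for k
      by (subst Ke) (simp add: lq_outer T2_def kil_lq kil_rq K(3))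
    have "ip1 (zf K) (zf K) * ip1 (mv C (kil \<rho> (\<eta> i))) (mv C (kil \<rho> (\<eta> j))) = 0"
      using CO[OF K(1) that(3,4,5)] by (simp add: e ip2_prod)
    then show ?thesis using that(2) K(2) by simp
  qed
  show "\<And>j. j < 3 \<Longrightarrow> \<eta> j False True * \<eta> j True False = 0"
    by (rule core2[OF R D dB dC O S CH]) auto
qed

lemma T2_tr: "T2 B C \<eta> = tr (T2 C B (tr \<eta>))"
  by (simp add: T2_def tr_lq tr_rq tr_tr lq_rq)

lemma rq_T2_tr: "rq K (T2 B C \<eta>) = tr (lq K (T2 C B (tr \<eta>)))"
  by (simp add: T2_def tr_lq tr_rq tr_tr lq_rq)

lemma deteta_tr: "deteta (\<lambda>j. tr (\<eta> j)) = - deteta \<eta>"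
  by (simp add: deteta_def det3_def tr_def algebra_simps)

lemma T2_nonzero: "det2 B \<noteq> 0 \<Longrightarrow> det2 C \<noteq> 0 \<Longrightarrow> \<eta> \<noteq> (\<lambda>_ _. 0) \<Longrightarrow> T2 B C \<eta> \<noteq> (\<lambda>_ _. 0)"
  unfolding T2_def using lq_inj rq_inj by blast

lemma deteta_nz_row: "deteta \<eta> \<noteq> 0 \<Longrightarrow> j < 3 \<Longrightarrow> \<eta> j \<noteq> (\<lambda>_ _. 0)"
  using deteta_row by fastforce

lemma exists_nonzero_child:
  assumes "complete_meas Ks" "\<phi> \<noteq> (\<lambda>_. 0)"
  shows "\<exists>K\<in>set Ks. apply_local p K \<phi> \<noteq> (\<lambda>_. 0)"
proof (rule ccontr)
  assume "\<not> ?thesis"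
  then have "\<And>K. K \<in> set Ks \<Longrightarrow> inner3 (apply_local p K \<phi>) (apply_local p K \<phi>) = 0"
    by (auto simp: inner3_def)
  then have "(\<Sum>K\<leftarrow>Ks. inner3 (apply_local p K \<phi>) (apply_local p K \<phi>)) = 0" by (rule sum_list_zero')
  then have "inner3 \<phi> \<phi> = 0" using inner_split[OF assms(1)] by simp
  then show False using assms(2) inner3_self_zero by blast
qed

lemma correct_Measure: "correct \<psi> i (Measure p ms) \<Longrightarrow> (K,q) \<in> set ms \<Longrightarrow> correct (apply_local p K \<psi>) i q"
  by (auto elim: correct.cases)

lemma ip1_self_nz: "x \<noteq> (\<lambda>_. 0) \<Longrightarrow> ip1 x x \<noteq> 0"
  using ip1_self_zero by blast

lemma dist2:
  assumes "wf_proto P"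
  shows "p < 3 \<Longrightarrow> x \<noteq> (\<lambda>_. 0) \<Longrightarrow> det2 B \<noteq> 0 \<Longrightarrow> det2 C \<noteq> 0 \<Longrightarrow>
    (\<And>j. j < 3 \<Longrightarrow> \<eta> j True True = 0) \<Longrightarrow> deteta \<eta> \<noteq> 0 \<Longrightarrow>
    (\<And>j. j < 3 \<Longrightarrow> correct (st p x (T2 B C (\<eta> j))) j P) \<Longrightarrow>
    j < 3 \<Longrightarrow> \<eta> j False True * \<eta> j True False = 0"
  using assms
proof (induction P arbitrary: x B C rule: wf_proto.induct)
  case (1 g)
  have nz: "st p x (T2 B C (\<eta> k)) \<noteq> (\<lambda>_. 0)" if "k < 3" for k
    using st_nonzero[OF 1(1) 1(2) T2_nonzero[OF 1(3) 1(4) deteta_nz_row[OF 1(6) that]]] .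
  have "g = k" if "k < 3" for k
    using 1(7)[OF that] nz[OF that] by (auto elim: correct.cases)
  then have "g = 0" "g = 1" by auto
  then show ?case by simp
next
  case (2 p' ms)
  note IH = 2(3)
  have wfm: "wf_proto (Measure p' ms)" using 2(1,2,3) by (auto intro: wf_proto.intros)
  have corr: "correct (apply_local p' K (st p x (T2 B C (\<eta> k)))) k q" if "(K,q) \<in> set ms" "k < 3" for K q k
    using correct_Measure[OF 2(10)[OF that(2)] that(1)] .
  have wfq: "wf_proto q" if "(K,q) \<in> set ms" for K q using IH that by auto
  have IHq: "\<eta> j False True * \<eta> j True False = 0" if "(K,q) \<in> set ms" "x' \<noteq> (\<lambda>_. 0)" "det2 B' \<noteq> 0" "det2 C' \<noteq> 0"
     "\<And>k. k < 3 \<Longrightarrow> correct (st p x' (T2 B' C' (\<eta> k))) k q" for K q x' B' C'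
  proof -
    have "wf_proto q \<and> (\<forall>x B C. p < 3 \<longrightarrow> x \<noteq> (\<lambda>_. 0) \<longrightarrow> det2 B \<noteq> 0 \<longrightarrow> det2 C \<noteq> 0 \<longrightarrow>
       (\<forall>j. j < 3 \<longrightarrow> \<eta> j True True = 0) \<longrightarrow> deteta \<eta> \<noteq> 0 \<longrightarrow>
       (\<forall>j. j < 3 \<longrightarrow> correct (st p x (T2 B C (\<eta> j))) j q) \<longrightarrow> j < 3 \<longrightarrow> \<eta> j False True * \<eta> j True False = 0)"
      using IH that(1) by fastforce
    then show ?thesis using that 2(4,8,9,11) by blast
  qed
  have Onode: "ip2 (T2 B C (\<eta> i)) (T2 B C (\<eta> k)) = 0" if "i < 3" "k < 3" "i \<noteq> k" for i k
  proof -
    have "inner3 (st p x (T2 B C (\<eta> i))) (st p x (T2 B C (\<eta> k))) = 0"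
      by (rule orth[OF wfm 2(10)[OF that(1)] 2(10)[OF that(2)] that(3)])
    then show ?thesis using inner_st[OF 2(4)] ip1_self_nz[OF 2(5)] by simp
  qed
  consider (pp) "p' = p" | (pq) "p' = qq p" | (pr) "p' = rr p" using party_cases[OF 2(4) 2(1)] by blast
  then show ?case
  proof cases
    case pp
    have "st p x (T2 B C (\<eta> 0)) \<noteq> (\<lambda>_. 0)"
      using st_nonzero[OF 2(4) 2(5) T2_nonzero[OF 2(6) 2(7) deteta_nz_row[OF 2(9)]]] by simp
    then obtain K where K: "K \<in> set (map fst ms)" "apply_local p K (st p x (T2 B C (\<eta> 0))) \<noteq> (\<lambda>_. 0)"
      using exists_nonzero_child[OF 2(2)] pp by blast
    then obtain q where Kq: "(K,q) \<in> set ms" by auto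
    have "mv K x \<noteq> (\<lambda>_. 0)" using K(2) st_p[OF 2(4)] st_zero by metis
    moreover have "correct (st p (mv K x) (T2 B C (\<eta> k))) k q" if "k < 3" for k
      using corr[OF Kq that] pp st_p[OF 2(4)] by simp
    ultimately show ?thesis using IHq[OF Kq _ 2(6) 2(7)] by blast
  next
    case pq
    show ?thesis
    proof (cases "\<exists>(K,q)\<in>set ms. det2 K \<noteq> 0")
      case True
      then obtain K q where Kq: "(K,q) \<in> set ms" "det2 K \<noteq> 0" by blast
      have "correct (st p x (T2 (mm K B) C (\<eta> k))) k q" if "k < 3" for k
        using corr[OF Kq(1) that] pq st_q[OF 2(4)] by (simp add: T2_def lq_lq)
      moreover have "det2 (mm K B) \<noteq> 0" using Kq(2) 2(6) by (simp add: det2_mm)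
      ultimately show ?thesis using IHq[of K q x "mm K B" C, OF Kq(1) 2(5) _ 2(7)] by blast
    next
      case False
      show ?thesis
      proof (rule sing_q[OF 2(8) 2(9) 2(6) 2(7) Onode 2(2)])
        show "det2 K = 0" if "K \<in> set (map fst ms)" for K using False that by auto
        show "ip2 (lq K (T2 B C (\<eta> i))) (lq K (T2 B C (\<eta> k))) = 0"
          if Kin: "K \<in> set (map fst ms)" "i < 3" "k < 3" "i \<noteq> k" for K i k
        proof -
          obtain q where Kq: "(K,q) \<in> set ms" using Kin(1) by auto
          have "inner3 (st p x (lq K (T2 B C (\<eta> i)))) (st p x (lq K (T2 B C (\<eta> k)))) = 0"
            using orth[OF wfq[OF Kq] corr[OF Kq Kin(2)] corr[OF Kq Kin(3)] Kin(4)] pq st_q[OF 2(4)] by simp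
          then show ?thesis using inner_st[OF 2(4)] ip1_self_nz[OF 2(5)] by simp
        qed
      qed (use 2(11) in simp_all)
    qed
  next
    case pr
    show ?thesis
    proof (cases "\<exists>(K,q)\<in>set ms. det2 K \<noteq> 0")
      case True
      then obtain K q where Kq: "(K,q) \<in> set ms" "det2 K \<noteq> 0" by blast
      have "correct (st p x (T2 B (mm K C) (\<eta> k))) k q" if "k < 3" for k
        using corr[OF Kq(1) that] pr st_r[OF 2(4)] by (simp add: T2_def rq_rq lq_rq)
      moreover have "det2 (mm K C) \<noteq> 0" using Kq(2) 2(7) by (simp add: det2_mm)
      ultimately show ?thesis using IHq[of K q x B "mm K C", OF Kq(1) 2(5) 2(6)] by blast
    next
      case False
      have "tr (\<eta> j) False True * tr (\<eta> j) True False = 0"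
      proof (rule sing_q[of "\<lambda>k. tr (\<eta> k)" C B "map fst ms"])
        show "tr (\<eta> k) True True = 0" if "k < 3" for k using 2(8)[OF that] by (simp add: tr_def)
        show "deteta (\<lambda>k. tr (\<eta> k)) \<noteq> 0" using 2(9) by (simp add: deteta_tr)
        show "ip2 (T2 C B (tr (\<eta> i))) (T2 C B (tr (\<eta> k))) = 0" if "i < 3" "k < 3" "i \<noteq> k" for i k
          using Onode[OF that] by (simp add: T2_tr[of B C] ip2_tr)
        show "det2 K = 0" if "K \<in> set (map fst ms)" for K using False that by auto
        show "ip2 (lq K (T2 C B (tr (\<eta> i)))) (lq K (T2 C B (tr (\<eta> k)))) = 0"
          if Kin: "K \<in> set (map fst ms)" "i < 3" "k < 3" "i \<noteq> k" for K i k
        proof -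
          obtain q where Kq: "(K,q) \<in> set ms" using Kin(1) by auto
          have "inner3 (st p x (rq K (T2 B C (\<eta> i)))) (st p x (rq K (T2 B C (\<eta> k)))) = 0"
            using orth[OF wfq[OF Kq] corr[OF Kq Kin(2)] corr[OF Kq Kin(3)] Kin(4)] pr st_r[OF 2(4)] by simp
          then have "ip2 (rq K (T2 B C (\<eta> i))) (rq K (T2 B C (\<eta> k))) = 0"
            using inner_st[OF 2(4)] ip1_self_nz[OF 2(5)] by simp
          then show ?thesis by (simp add: rq_T2_tr ip2_tr)
        qed
      qed (use 2(2,6,7,11) in simp_all)
      then show ?thesis by (simp add: tr_def mult.commute)
    qed
  qed
qed


definition cutc :: "(bool \<Rightarrow> complex) \<Rightarrow> (nat \<Rightarrow> complex) \<Rightarrow> (nat \<Rightarrow> complex) \<Rightarrow> (nat \<Rightarrow> complex) \<Rightarrow> (nat \<Rightarrow> complex) \<Rightarrow> nat \<Rightarrow> bool \<Rightarrow> bool \<Rightarrow> complex" where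
  "cutc \<rho> \<alpha> P Q R j = (\<lambda>b c. if b then (if c then 0 else \<rho> False * Q j)
       else (if c then \<rho> False * R j else \<rho> False * \<alpha> j + \<rho> True * P j))"

definition detc :: "(nat \<Rightarrow> complex) \<Rightarrow> (nat \<Rightarrow> complex) \<Rightarrow> (nat \<Rightarrow> complex) \<Rightarrow> complex" where
  "detc \<alpha> Q R = det3 (\<alpha> 0) (Q 0) (R 0) (\<alpha> 1) (Q 1) (R 1) (\<alpha> 2) (Q 2) (R 2)"

lemma detc_pair:
  assumes D: "detc \<alpha> Q R \<noteq> 0" and ij: "i < 3" "j < 3" "i \<noteq> j"
    and z: "R i = 0" "R j = 0"
  shows "\<alpha> i * Q j - \<alpha> j * Q i \<noteq> 0"
proof
  assume h: "\<alpha> i * Q j - \<alpha> j * Q i = 0"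
  have "\<exists>k. detc \<alpha> Q R = k * (\<alpha> i * Q j - \<alpha> j * Q i)"
  proof -
    from ij have "(i = 0 \<and> j = 1) \<or> (i = 1 \<and> j = 0) \<or> (i = 0 \<and> j = 2) \<or> (i = 2 \<and> j = 0) \<or> (i = 1 \<and> j = 2) \<or> (i = 2 \<and> j = 1)"
      by auto
    then show ?thesis
    proof (elim disjE conjE)
      assume "i = 0" "j = 1" then show ?thesis using z
        by (intro exI[of _ "R 2"]) (simp add: detc_def det3_def algebra_simps)
    next
      assume "i = 1" "j = 0" then show ?thesis using z
        by (intro exI[of _ "- R 2"]) (simp add: detc_def det3_def algebra_simps)
    next
      assume "i = 0" "j = 2" then show ?thesis using z
        by (intro exI[of _ "- R 1"]) (simp add: detc_def det3_def algebra_simps)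
    next
      assume "i = 2" "j = 0" then show ?thesis using z
        by (intro exI[of _ "R 1"]) (simp add: detc_def det3_def algebra_simps)
    next
      assume "i = 1" "j = 2" then show ?thesis using z
        by (intro exI[of _ "R 0"]) (simp add: detc_def det3_def algebra_simps)
    next
      assume "i = 2" "j = 1" then show ?thesis using z
        by (intro exI[of _ "- R 0"]) (simp add: detc_def det3_def algebra_simps)
    qed
  qed
  then obtain k where k: "detc \<alpha> Q R = k * (\<alpha> i * Q j - \<alpha> j * Q i)" by blast
  have "detc \<alpha> Q R = 0" unfolding k h by simp
  with D show False by simp
qed

lemma detc_swap: "detc \<alpha> R Q = - detc \<alpha> Q R"
  by (simp add: detc_def det3_def algebra_simps)

lemma detc_zero_col: "(\<And>j. j < 3 \<Longrightarrow> R j = 0) \<Longrightarrow> detc \<alpha> Q R = 0"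
  by (simp add: detc_def det3_def)

lemma sum_lin_rho: "(\<Sum>(w,\<rho>)\<leftarrow>ch. w * cnj (\<rho> a) * (\<rho> False * X0 + \<rho> True * X1)) =
   (\<Sum>(w,\<rho>)\<leftarrow>ch. w * (cnj (\<rho> a) * \<rho> False)) * X0 + (\<Sum>(w,\<rho>)\<leftarrow>ch. w * (cnj (\<rho> a) * \<rho> True)) * X1"
  by (induction ch) (auto simp: algebra_simps)

lemma key3_d1:
  fixes \<alpha> P Q R :: "nat \<Rightarrow> complex" and ch :: "(complex \<times> (bool \<Rightarrow> complex)) list"
  assumes abc: "a < 3" "b < 3" "c < 3" "a \<noteq> c" "b \<noteq> c"
    and z: "R a = 0" "R b = 0" "Q c = 0" "R c \<noteq> 0"
    and PQR: "\<And>j. P j = u * Q j + v * R j" and uv: "u \<noteq> 0" "v \<noteq> 0"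
    and ind: "\<alpha> a * Q b - \<alpha> b * Q a \<noteq> 0"
    and dA: "det2 A \<noteq> 0" and dB: "det2 B \<noteq> 0" and dC: "det2 C \<noteq> 0"
    and S: "\<And>a c. (\<Sum>(w,\<rho>)\<leftarrow>ch. w * (cnj (\<rho> a) * \<rho> c)) = Mq A a c"
    and CO: "\<And>w \<rho> i j. (w,\<rho>) \<in> set ch \<Longrightarrow> w \<noteq> 0 \<Longrightarrow> i < 3 \<Longrightarrow> j < 3 \<Longrightarrow> i \<noteq> j \<Longrightarrow>
         ip2 (T2 B C (cutc \<rho> \<alpha> P Q R i)) (T2 B C (cutc \<rho> \<alpha> P Q R j)) = 0"
  shows False
proof -
  define F where "F \<rho> = Mq C False False * (\<rho> False * \<alpha> c + \<rho> True * P c) + Mq C False True * (\<rho> False * R c)" for \<rho> :: "bool \<Rightarrow> complex"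
  define Y where "Y \<rho> j = cnj (\<rho> False * \<alpha> j + \<rho> True * P j) * Mq B False False + cnj (\<rho> False * Q j) * Mq B True False"
    for \<rho> :: "bool \<Rightarrow> complex" and j
  have dec: "ip2 (T2 B C (cutc \<rho> \<alpha> P Q R j)) (T2 B C (cutc \<rho> \<alpha> P Q R c)) = Y \<rho> j * F \<rho>"
    if "R j = 0" for \<rho> j
  proof -
    have "ip2 (T2 B C (cutc \<rho> \<alpha> P Q R j)) (T2 B C (cutc \<rho> \<alpha> P Q R c)) =
      ip1 (\<lambda>b. cutc \<rho> \<alpha> P Q R j b False) (mv (Mq B) (\<lambda>b. Mq C False False * cutc \<rho> \<alpha> P Q R c b False + Mq C False True * cutc \<rho> \<alpha> P Q R c b True))"
      by (rule ip2_T2_decomp) (simp_all add: cutc_def that)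
    also have "\<dots> = Y \<rho> j * F \<rho>"
      by (simp add: ip1_def mv_def cutc_def Y_def F_def z(3) algebra_simps)
    finally show ?thesis .
  qed
  have Fz: "F \<rho> = 0" if wr: "(w,\<rho>) \<in> set ch" "w \<noteq> 0" for w \<rho>
  proof (rule ccontr)
    assume Fn: "F \<rho> \<noteq> 0"
    have "Y \<rho> a * F \<rho> = 0" using CO[OF wr abc(1) abc(3) abc(4)] dec[OF z(1)] by simp
    then have Ya: "Y \<rho> a = 0" using Fn by simp
    have "Y \<rho> b * F \<rho> = 0" using CO[OF wr abc(2) abc(3) abc(5)] dec[OF z(2)] by simp
    then have Yb: "Y \<rho> b = 0" using Fn by simp
    show False
    proof (cases "\<rho> False = 0")
      case False
      let ?m = "\<lambda>j. (\<lambda>x. if x then \<rho> False * Q j else \<rho> False * \<alpha> j + \<rho> True * P j)"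
      have "(\<lambda>x. Mq B x False) = (\<lambda>_. 0)"
      proof (rule LA1[of "?m a" _ "?m b"])
        show "ip1 (?m a) (\<lambda>x. Mq B x False) = 0" using Ya by (simp add: ip1_def Y_def)
        show "ip1 (?m b) (\<lambda>x. Mq B x False) = 0" using Yb by (simp add: ip1_def Y_def)
        have "?m a False * ?m b True - ?m b False * ?m a True = \<rho> False * \<rho> False * (\<alpha> a * Q b - \<alpha> b * Q a)"
          using PQR[of a] PQR[of b] z(1,2) by (simp add: algebra_simps)
        then show "?m a False * ?m b True - ?m b False * ?m a True \<noteq> 0" using False ind by simp
      qed
      then have "Mq B False False = 0" by (simp add: fun_eq_iff)
      then show False using Mq_col_nonzero[OF dB] by simp
    next
      case True
      then have rT: "\<rho> True \<noteq> 0" using Fn by (simp add: F_def)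
      have "cnj (\<rho> True * P a) * Mq B False False = 0" using Ya True by (simp add: Y_def)
      then have "P a = 0" using rT Mq_col_nonzero[OF dB] by simp
      then have Qa: "Q a = 0" using PQR[of a] z(1) uv by simp
      have "cnj (\<rho> True * P b) * Mq B False False = 0" using Yb True by (simp add: Y_def)
      then have "P b = 0" using rT Mq_col_nonzero[OF dB] by simp
      then have Qb: "Q b = 0" using PQR[of b] z(2) uv by simp
      show False using ind Qa Qb by simp
    qed
  qed
  define X0 where "X0 = Mq C False False * \<alpha> c + Mq C False True * R c"
  define X1 where "X1 = Mq C False False * P c"
  have FX: "F \<rho> = \<rho> False * X0 + \<rho> True * X1" for \<rho>
    by (simp add: F_def X0_def X1_def algebra_simps)
  have "(\<Sum>(w,\<rho>)\<leftarrow>ch. w * cnj (\<rho> a') * (\<rho> False * X0 + \<rho> True * X1)) = 0" for a'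
  proof (rule sum_list_zero')
    fix x assume xin: "x \<in> set ch"
    obtain w \<rho> where xe: "x = (w,\<rho>)" by (rule prod.exhaust)
    show "(\<lambda>(w,\<rho>). w * cnj (\<rho> a') * (\<rho> False * X0 + \<rho> True * X1)) x = 0"
    proof (cases "w = 0")
      case False
      then have "F \<rho> = 0" using Fz xin xe by blast
      then show ?thesis using xe FX by simp
    qed (simp add: xe)
  qed
  then have "Mq A a' False * X0 + Mq A a' True * X1 = 0" for a'
    using sum_lin_rho[of a' X0 X1 ch] S by simp
  then have "mv (Mq A) (\<lambda>x. if x then X1 else X0) = (\<lambda>_. 0)" by (simp add: mv_def fun_eq_iff)
  then have "(\<lambda>x. if x then X1 else X0) = (\<lambda>_. 0)" using mv_inj[of "Mq A"] dA by (simp add: det2_Mq)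
  then have "X1 = 0" by (metis (full_types))
  then have "P c = 0" using Mq_col_nonzero[OF dC] by (simp add: X1_def)
  then have "R c = 0" using PQR[of c] z(3) uv by simp
  with z(4) show False by simp
qed

lemma cutc_tr: "cutc \<rho> \<alpha> P R Q j = tr (cutc \<rho> \<alpha> P Q R j)"
  by (simp add: cutc_def tr_def fun_eq_iff)

lemma ip2_T2_swap: "ip2 (T2 C B (tr \<eta>)) (T2 C B (tr \<eta>')) = ip2 (T2 B C \<eta>) (T2 B C \<eta>')"
  by (simp add: T2_tr[of B C \<eta>] T2_tr[of B C \<eta>'] ip2_tr)

lemma key3_abs:
  fixes \<alpha> P Q R :: "nat \<Rightarrow> complex" and ch :: "(complex \<times> (bool \<Rightarrow> complex)) list"
  assumes PQR: "\<And>j. P j = u * Q j + v * R j" and uv: "u \<noteq> 0" "v \<noteq> 0"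
    and D: "detc \<alpha> Q R \<noteq> 0"
    and dA: "det2 A \<noteq> 0" and dB: "det2 B \<noteq> 0" and dC: "det2 C \<noteq> 0"
    and S: "\<And>a c. (\<Sum>(w,\<rho>)\<leftarrow>ch. w * (cnj (\<rho> a) * \<rho> c)) = Mq A a c"
    and CO: "\<And>w \<rho> i j. (w,\<rho>) \<in> set ch \<Longrightarrow> w \<noteq> 0 \<Longrightarrow> i < 3 \<Longrightarrow> j < 3 \<Longrightarrow> i \<noteq> j \<Longrightarrow>
         ip2 (T2 B C (cutc \<rho> \<alpha> P Q R i)) (T2 B C (cutc \<rho> \<alpha> P Q R j)) = 0"
    and PROD: "\<And>w \<rho> j. (w,\<rho>) \<in> set ch \<Longrightarrow> w \<noteq> 0 \<Longrightarrow> \<rho> False \<noteq> 0 \<Longrightarrow> j < 3 \<Longrightarrow> Q j * R j = 0"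
  shows False
proof -
  have "Mq A False False \<noteq> 0" by (rule Mq_col_nonzero[OF dA])
  then have "(\<Sum>(w,\<rho>)\<leftarrow>ch. w * (cnj (\<rho> False) * \<rho> False)) \<noteq> 0" using S by simp
  then obtain x where "x \<in> set ch" "(\<lambda>(w,\<rho>). w * (cnj (\<rho> False) * \<rho> False)) x \<noteq> 0"
    using sum_list_nonzero by blast
  moreover obtain w0 \<rho>0 where "x = (w0,\<rho>0)" by (rule prod.exhaust)
  ultimately have w0: "(w0,\<rho>0) \<in> set ch" "w0 \<noteq> 0" "\<rho>0 False \<noteq> 0" by auto
  have QR: "Q j * R j = 0" if "j < 3" for j using PROD[OF w0 that] .
  have "\<exists>c1<3. R c1 \<noteq> 0"
  proof (rule ccontr)
    assume "\<not> (\<exists>c1<3. R c1 \<noteq> 0)"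
    then have "\<And>j. j < 3 \<Longrightarrow> R j = 0" by auto
    then have "detc \<alpha> Q R = 0" by (rule detc_zero_col)
    with D show False by simp
  qed
  then obtain c1 where c1: "c1 < 3" "R c1 \<noteq> 0" by blast
  have "\<exists>c2<3. Q c2 \<noteq> 0"
  proof (rule ccontr)
    assume "\<not> (\<exists>c2<3. Q c2 \<noteq> 0)"
    then have "\<And>j. j < 3 \<Longrightarrow> Q j = 0" by auto
    then have "detc \<alpha> R Q = 0" by (rule detc_zero_col)
    with D show False using detc_swap[of \<alpha> Q R] by simp
  qed
  then obtain c2 where c2: "c2 < 3" "Q c2 \<noteq> 0" by blast
  have Qc1: "Q c1 = 0" using QR[OF c1(1)] c1(2) by simp
  have Rc2: "R c2 = 0" using QR[OF c2(1)] c2(2) by simp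
  have c12: "c1 \<noteq> c2" using Qc1 c2(2) by auto
  define m where "m = 3 - c1 - c2"
  have c1c: "c1 = 0 \<or> c1 = 1 \<or> c1 = 2" using c1(1) by auto
  have c2c: "c2 = 0 \<or> c2 = 1 \<or> c2 = 2" using c2(1) by auto
  have m: "m < 3" "m \<noteq> c1" "m \<noteq> c2" using c1c c2c c12 by (auto simp: m_def)
  show False
  proof (cases "R m = 0")
    case True
    have ind: "\<alpha> c2 * Q m - \<alpha> m * Q c2 \<noteq> 0"
      using detc_pair[OF D c2(1) m(1) _ Rc2 True] m(3) by simp
    note Rm = True
    show False
      by (rule key3_d1[where a=c2 and b=m and c=c1 and \<alpha>=\<alpha> and P=P and Q=Q and R=R and u=u and v=v and A=A and B=B and C=C and ch=ch])
         (fact c2(1) m(1) c1(1) c12[symmetric] m(2) Rc2 Rm Qc1 c1(2) PQR uv ind dA dB dC S CO)+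
  next
    case False
    then have Qm: "Q m = 0" using QR[OF m(1)] by simp
    have D': "detc \<alpha> R Q \<noteq> 0" using D detc_swap[of \<alpha> Q R] by simp
    have CO': "ip2 (T2 C B (cutc \<rho> \<alpha> P R Q i)) (T2 C B (cutc \<rho> \<alpha> P R Q j)) = 0"
      if "(w,\<rho>) \<in> set ch" "w \<noteq> 0" "i < 3" "j < 3" "i \<noteq> j" for w \<rho> i j
      using CO[OF that] by (simp only: cutc_tr[of \<rho> \<alpha> P Q R] ip2_T2_swap)
    have ind': "\<alpha> c1 * R m - \<alpha> m * R c1 \<noteq> 0"
      using detc_pair[OF D' c1(1) m(1) _ Qc1 Qm] m(2) by simp
    have PQR': "P j = v * R j + u * Q j" for j using PQR[of j] by (simp add: algebra_simps)
    show False
      by (rule key3_d1[where a=c1 and b=m and c=c2 and \<alpha>=\<alpha> and P=P and Q=R and R=Q and u=v and v=u and A=A and B=C and C=B and ch=ch])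
         (fact c1(1) m(1) c2(1) c12 m(3) Qc1 Qm Rc2 c2(2) PQR' uv ind' dA dC dB S CO')+
  qed
qed


lemma apply_comp: "p < 3 \<Longrightarrow> apply_local p K (apply_local p K' \<phi>) = apply_local p (mm K K') \<phi>"
  by (drule p3_cases) (auto simp: apply_local_def mm_def fun_eq_iff sum_bool algebra_simps)

lemma apply_zero: "apply_local p K (\<lambda>_. 0) = (\<lambda>_. 0)"
  by (auto simp: apply_local_def fun_eq_iff)

definition Id2 :: qop where "Id2 a b = (if a = b then 1 else 0)"

definition inv2 :: "qop \<Rightarrow> qop" where
  "inv2 K a b = (if a then (if b then K False False else - K True False) else (if b then - K False True else K True True)) / det2 K"

definition adj2 :: "qop \<Rightarrow> qop" where
  "adj2 K a b = (if a then (if b then K False False else - K True False) else (if b then - K False True else K True True))"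

lemma inv2_adj: "inv2 K a b = adj2 K a b / det2 K"
  by (simp add: inv2_def adj2_def)

lemma adj2_mm: "mm (adj2 K) K a b = (if a = b then det2 K else 0)"
  by (cases a; cases b) (simp_all add: mm_def adj2_def det2_def algebra_simps)

lemma inv2_mm: "det2 K \<noteq> 0 \<Longrightarrow> mm (inv2 K) K = Id2"
proof -
  assume d: "det2 K \<noteq> 0"
  have "mm (inv2 K) K a b = mm (adj2 K) K a b / det2 K" for a b
    by (simp add: mm_def inv2_adj add_divide_distrib)
  then have "mm (inv2 K) K a b = Id2 a b" for a b
    using d by (simp add: adj2_mm Id2_def)
  then show ?thesis by (simp add: fun_eq_iff)
qed

lemma apply_Id2: "apply_local p Id2 \<phi> = \<phi>"
  by (auto simp: apply_local_def Id2_def fun_eq_iff sum_bool)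

lemma apply_inj: "p < 3 \<Longrightarrow> det2 K \<noteq> 0 \<Longrightarrow> apply_local p K \<phi> = (\<lambda>_. 0) \<Longrightarrow> \<phi> = (\<lambda>_. 0)"
proof -
  assume p: "p < 3" and d: "det2 K \<noteq> 0" and h: "apply_local p K \<phi> = (\<lambda>_. 0)"
  have "\<phi> = apply_local p (inv2 K) (apply_local p K \<phi>)"
    by (simp add: apply_comp[OF p] inv2_mm[OF d] apply_Id2)
  also have "\<dots> = (\<lambda>_. 0)" using h by (simp add: apply_zero)
  finally show ?thesis .
qed

definition T3 :: "qop \<Rightarrow> qop \<Rightarrow> qop \<Rightarrow> state \<Rightarrow> state" where
  "T3 A B C \<psi> = apply_local 0 A (apply_local 1 B (apply_local 2 C \<psi>))"

lemma T3_0: "apply_local 0 K (T3 A B C \<psi>) = T3 (mm K A) B C \<psi>"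
  by (simp add: T3_def apply_comp)

lemma comm10: "apply_local 1 K (apply_local 0 A X) = apply_local 0 A (apply_local 1 K X)"
  unfolding apply_local_def fun_eq_iff by (simp add: sum_bool algebra_simps split: prod.splits)
lemma comm20: "apply_local 2 K (apply_local 0 A X) = apply_local 0 A (apply_local 2 K X)"
  unfolding apply_local_def fun_eq_iff by (simp add: sum_bool algebra_simps split: prod.splits)
lemma comm21: "apply_local 2 K (apply_local 1 A X) = apply_local 1 A (apply_local 2 K X)"
  unfolding apply_local_def fun_eq_iff by (simp add: sum_bool algebra_simps split: prod.splits)
lemma comp1: "apply_local 1 K (apply_local 1 K' X) = apply_local 1 (mm K K') X"
  by (rule apply_comp) auto
lemma comp2: "apply_local 2 K (apply_local 2 K' X) = apply_local 2 (mm K K') X"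
  by (rule apply_comp) auto

lemma T3_1: "apply_local 1 K (T3 A B C \<psi>) = T3 A (mm K B) C \<psi>"
  unfolding T3_def comm10 comp1 ..

lemma T3_2: "apply_local 2 K (T3 A B C \<psi>) = T3 A B (mm K C) \<psi>"
  unfolding T3_def comm20 comm21 comp2 ..

lemma T3_nonzero: "det2 A \<noteq> 0 \<Longrightarrow> det2 B \<noteq> 0 \<Longrightarrow> det2 C \<noteq> 0 \<Longrightarrow> \<psi> \<noteq> (\<lambda>_. 0) \<Longrightarrow> T3 A B C \<psi> \<noteq> (\<lambda>_. 0)"
proof
  assume dA: "det2 A \<noteq> 0" and dB: "det2 B \<noteq> 0" and dC: "det2 C \<noteq> 0" and nz: "\<psi> \<noteq> (\<lambda>_. 0)"
    and h: "T3 A B C \<psi> = (\<lambda>_. 0)"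
  have "apply_local 1 B (apply_local 2 C \<psi>) = (\<lambda>_. 0)"
    using apply_inj[of 0 A, OF _ dA] h unfolding T3_def by simp
  then have "apply_local 2 C \<psi> = (\<lambda>_. 0)" using apply_inj[of 1 B, OF _ dB] by simp
  then have "\<psi> = (\<lambda>_. 0)" using apply_inj[of 2 C, OF _ dC] by simp
  with nz show False by simp
qed

definition cut0 :: "(bool \<Rightarrow> complex) \<Rightarrow> state \<Rightarrow> bool \<Rightarrow> bool \<Rightarrow> complex" where
  "cut0 \<rho> \<psi> b c = \<rho> False * \<psi> (False, b, c) + \<rho> True * \<psi> (True, b, c)"
definition cut1 :: "(bool \<Rightarrow> complex) \<Rightarrow> state \<Rightarrow> bool \<Rightarrow> bool \<Rightarrow> complex" where
  "cut1 \<rho> \<psi> a c = \<rho> False * \<psi> (a, False, c) + \<rho> True * \<psi> (a, True, c)"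
definition cut2 :: "(bool \<Rightarrow> complex) \<Rightarrow> state \<Rightarrow> bool \<Rightarrow> bool \<Rightarrow> complex" where
  "cut2 \<rho> \<psi> a b = \<rho> False * \<psi> (a, b, False) + \<rho> True * \<psi> (a, b, True)"

lemma mm_outer: "mm (outer z r) A = outer z (rowm r A)"
  by (simp add: mm_def outer_def rowm_def fun_eq_iff algebra_simps)

lemma outer_apply0: "apply_local 0 (outer z \<rho>) \<phi> = st 0 z (cut0 \<rho> \<phi>)"
  by (auto simp: apply_local_def st_def outer_def cut0_def fun_eq_iff sum_bool algebra_simps)
lemma outer_apply1: "apply_local 1 (outer z \<rho>) \<phi> = st 1 z (cut1 \<rho> \<phi>)"
  by (auto simp: apply_local_def st_def outer_def cut1_def fun_eq_iff sum_bool algebra_simps)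
lemma outer_apply2: "apply_local 2 (outer z \<rho>) \<phi> = st 2 z (cut2 \<rho> \<phi>)"
  by (auto simp: apply_local_def st_def outer_def cut2_def fun_eq_iff sum_bool algebra_simps)

lemma cut0_1: "cut0 \<rho> (apply_local 1 B \<phi>) = lq B (cut0 \<rho> \<phi>)"
  by (simp add: apply_local_def cut0_def lq_def fun_eq_iff sum_bool algebra_simps)
lemma cut0_2: "cut0 \<rho> (apply_local 2 C \<phi>) = rq C (cut0 \<rho> \<phi>)"
  by (simp add: apply_local_def cut0_def rq_def fun_eq_iff sum_bool algebra_simps)
lemma cut1_2: "cut1 \<rho> (apply_local 2 C \<phi>) = rq C (cut1 \<rho> \<phi>)"
  by (simp add: apply_local_def cut1_def rq_def fun_eq_iff sum_bool algebra_simps)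

lemma st1_0: "apply_local 0 A (st 1 z \<chi>) = st 1 z (lq A \<chi>)"
  using st_q[of 1 A z \<chi>] by (simp add: qq_def)
lemma st2_0: "apply_local 0 A (st 2 z \<chi>) = st 2 z (lq A \<chi>)"
  using st_q[of 2 A z \<chi>] by (simp add: qq_def)
lemma st2_1: "apply_local 1 B (st 2 z \<chi>) = st 2 z (rq B \<chi>)"
  using st_r[of 2 B z \<chi>] by (simp add: rr_def)

lemma T3_outer0: "T3 (outer z \<rho>) B C \<psi> = st 0 z (T2 B C (cut0 \<rho> \<psi>))"
  unfolding T3_def outer_apply0 cut0_1 cut0_2 T2_def ..

lemma T3_outer1: "T3 A (outer z \<rho>) C \<psi> = st 1 z (T2 A C (cut1 \<rho> \<psi>))"
  unfolding T3_def outer_apply1 cut1_2 st1_0 T2_def ..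

lemma T3_outer2: "T3 A B (outer z \<rho>) \<psi> = st 2 z (T2 A B (cut2 \<rho> \<psi>))"
  unfolding T3_def outer_apply2 st2_1 st2_0 T2_def ..


lemma S_ch:
  assumes cm: "complete_meas Ks" and sg: "\<And>K. K \<in> set Ks \<Longrightarrow> det2 K = 0"
  shows "(\<Sum>(w,\<rho>)\<leftarrow>map (\<lambda>K. (ip1 (zf K) (zf K), rowm (rf K) A)) Ks. w * (cnj (\<rho> a) * \<rho> c)) = Mq A a c"
proof -
  have "(\<Sum>(w,\<rho>)\<leftarrow>map (\<lambda>K. (ip1 (zf K) (zf K), rowm (rf K) A)) Ks. w * (cnj (\<rho> a) * \<rho> c)) =
     (\<Sum>K\<leftarrow>Ks. ip1 (zf K) (zf K) * (cnj (rowm (rf K) A a) * rowm (rf K) A c))"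
    by (simp add: comp_def)
  also have "\<dots> = (\<Sum>K\<leftarrow>Ks. Mq K False False * (cnj (A False a) * A False c) + Mq K False True * (cnj (A False a) * A True c)
        + Mq K True False * (cnj (A True a) * A False c) + Mq K True True * (cnj (A True a) * A True c))"
  proof (rule arg_cong[where f = sum_list], rule map_cong[OF refl])
    fix K assume "K \<in> set Ks"
    then have "K = outer (zf K) (rf K)" using sg outer_zf_rf by blast
    then show "ip1 (zf K) (zf K) * (cnj (rowm (rf K) A a) * rowm (rf K) A c) =
      Mq K False False * (cnj (A False a) * A False c) + Mq K False True * (cnj (A False a) * A True c)
        + Mq K True False * (cnj (A True a) * A False c) + Mq K True True * (cnj (A True a) * A True c)"
      using S_outer[of "zf K" "rf K" A a c] by simp
  qed
  also have "\<dots> = Mq A a c"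
    unfolding sum_list_lin4 complete_Mq[OF cm] by (simp add: Mq_def sum_bool)
  finally show ?thesis .
qed

lemma deteta_cutc:
  assumes PQR: "\<And>j. P j = u * Q j + v * R j"
  shows "deteta (\<lambda>j. cutc \<rho> \<alpha> P Q R j) = \<rho> False ^ 3 * detc \<alpha> Q R"
  by (simp add: deteta_def detc_def det3_def cutc_def PQR power3_eq_cube algebra_simps)

lemma key3_gen:
  fixes \<alpha> P Q R :: "nat \<Rightarrow> complex"
  assumes p: "p < 3" and PQR: "\<And>j. P j = u * Q j + v * R j" and uv: "u \<noteq> 0" "v \<noteq> 0"
    and D: "detc \<alpha> Q R \<noteq> 0"
    and dA: "det2 A \<noteq> 0" and dB: "det2 B \<noteq> 0" and dC: "det2 C \<noteq> 0"
    and cm: "complete_meas (map fst ms)"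
    and sg: "\<And>K q. (K,q) \<in> set ms \<Longrightarrow> det2 K = 0"
    and wf: "\<And>K q. (K,q) \<in> set ms \<Longrightarrow> wf_proto q"
    and chc: "\<And>K q j. (K,q) \<in> set ms \<Longrightarrow> j < 3 \<Longrightarrow>
        correct (st p (zf K) (T2 B C (cutc (rowm (rf K) A) \<alpha> P Q R j))) j q"
  shows False
proof -
  define chl where "chl = map (\<lambda>K. (ip1 (zf K) (zf K), rowm (rf K) A)) (map fst ms)"
  have S: "(\<Sum>(w,\<rho>)\<leftarrow>chl. w * (cnj (\<rho> a) * \<rho> c)) = Mq A a c" for a c
    unfolding chl_def by (rule S_ch[OF cm]) (use sg in auto)
  have getK: "\<exists>K q. (K,q) \<in> set ms \<and> w = ip1 (zf K) (zf K) \<and> \<rho> = rowm (rf K) A" if "(w,\<rho>) \<in> set chl" for w \<rho>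
    using that by (auto simp: chl_def)
  have CO: "ip2 (T2 B C (cutc \<rho> \<alpha> P Q R i)) (T2 B C (cutc \<rho> \<alpha> P Q R j)) = 0"
    if wr: "(w,\<rho>) \<in> set chl" "w \<noteq> 0" "i < 3" "j < 3" "i \<noteq> j" for w \<rho> i j
  proof -
    obtain K q where K: "(K,q) \<in> set ms" "w = ip1 (zf K) (zf K)" "\<rho> = rowm (rf K) A"
      using getK[OF wr(1)] by blast
    have "inner3 (st p (zf K) (T2 B C (cutc \<rho> \<alpha> P Q R i))) (st p (zf K) (T2 B C (cutc \<rho> \<alpha> P Q R j))) = 0"
      using orth[OF wf[OF K(1)] chc[OF K(1) wr(3)] chc[OF K(1) wr(4)] wr(5)] K(3) by simp
    then have "ip1 (zf K) (zf K) * ip2 (T2 B C (cutc \<rho> \<alpha> P Q R i)) (T2 B C (cutc \<rho> \<alpha> P Q R j)) = 0"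
      using inner_st[OF p] by simp
    then show ?thesis using wr(2) K(2) by simp
  qed
  have PROD: "Q j * R j = 0"
    if wr: "(w,\<rho>) \<in> set chl" "w \<noteq> 0" "\<rho> False \<noteq> 0" "j < 3" for w \<rho> j
  proof -
    obtain K q where K: "(K,q) \<in> set ms" "w = ip1 (zf K) (zf K)" "\<rho> = rowm (rf K) A"
      using getK[OF wr(1)] by blast
    have zn: "zf K \<noteq> (\<lambda>_. 0)"
    proof
      assume "zf K = (\<lambda>_. 0)"
      then have "w = 0" using K(2) by (simp add: ip1_def)
      with wr(2) show False by simp
    qed
    have dn: "deteta (\<lambda>j. cutc \<rho> \<alpha> P Q R j) \<noteq> 0"
      using deteta_cutc[of P u Q v R \<rho> \<alpha>, OF PQR] wr(3) D by simp
    have "cutc \<rho> \<alpha> P Q R j False True * cutc \<rho> \<alpha> P Q R j True False = 0"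
    proof (rule dist2[OF wf[OF K(1)] p zn dB dC _ dn _ wr(4)])
      show "cutc \<rho> \<alpha> P Q R k True True = 0" if "k < 3" for k by (simp add: cutc_def)
      show "correct (st p (zf K) (T2 B C (cutc \<rho> \<alpha> P Q R k))) k q" if "k < 3" for k
        using chc[OF K(1) that] K(3) by simp
    qed
    then show ?thesis using wr(3) by (auto simp: cutc_def)
  qed
  show False by (rule key3_abs[OF PQR uv D dA dB dC S CO PROD])
qed

lemma detc_row0: "j < 3 \<Longrightarrow> \<alpha> j = 0 \<Longrightarrow> Q j = 0 \<Longrightarrow> R j = 0 \<Longrightarrow> detc \<alpha> Q R = 0"
  by (drule p3_cases) (auto simp: detc_def det3_def)

lemma C3:
  fixes \<psi> :: "nat \<Rightarrow> state"
  assumes wfP: "wf_proto P"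
    and Z: "\<And>j. j < 3 \<Longrightarrow> \<psi> j (True,True,False) = 0 \<and> \<psi> j (True,False,True) = 0 \<and> \<psi> j (False,True,True) = 0 \<and> \<psi> j (True,True,True) = 0"
    and L: "\<And>j. j < 3 \<Longrightarrow> \<psi> j (True,False,False) + \<psi> j (False,True,False) = 2 * \<psi> j (False,False,True)"
    and Dl: "detc (\<lambda>j. \<psi> j (False,False,False)) (\<lambda>j. \<psi> j (True,False,False)) (\<lambda>j. \<psi> j (False,True,False)) \<noteq> 0"
  shows "det2 A \<noteq> 0 \<Longrightarrow> det2 B \<noteq> 0 \<Longrightarrow> det2 C \<noteq> 0 \<Longrightarrow> (\<And>j. j < 3 \<Longrightarrow> correct (T3 A B C (\<psi> j)) j P) \<Longrightarrow> False"
  using wfP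
proof (induction P arbitrary: A B C rule: wf_proto.induct)
  define al where "al j = (if j < 3 then \<psi> j (False,False,False) else 0)" for j
  define sv where "sv j = (if j < 3 then \<psi> j (True,False,False) else 0)" for j
  define tv where "tv j = (if j < 3 then \<psi> j (False,True,False) else 0)" for j
  define gv where "gv j = (if j < 3 then \<psi> j (False,False,True) else 0)" for j
  have gvs: "gv j = sv j / 2 + tv j / 2" for j
    using L[of j] by (auto simp: gv_def sv_def tv_def field_simps)
  have D: "detc al sv tv \<noteq> 0" using Dl by (simp add: detc_def al_def sv_def tv_def)
  have D0: "detc al tv gv \<noteq> 0"
  proof -
    have "detc al tv gv = - detc al sv tv / 2"
      by (simp add: detc_def det3_def gvs field_simps)
    then show ?thesis using D by auto
  qed
  have D1: "detc al sv gv \<noteq> 0"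
  proof -
    have "detc al sv gv = detc al sv tv / 2"
      by (simp add: detc_def det3_def gvs field_simps)
    then show ?thesis using D by auto
  qed
  have P0: "sv j = (-1) * tv j + 2 * gv j" for j using gvs[of j] by (simp add: field_simps)
  have P1: "tv j = (-1) * sv j + 2 * gv j" for j using gvs[of j] by (simp add: field_simps)
  have P2: "gv j = (1/2) * sv j + (1/2) * tv j" for j using gvs[of j] by (simp add: field_simps)
  have c0: "cut0 \<rho> (\<psi> j) = cutc \<rho> al sv tv gv j" if "j < 3" for \<rho> j
    using Z[OF that] that by (auto simp: cut0_def cutc_def al_def sv_def tv_def gv_def fun_eq_iff all_bool_eq)
  have c1: "cut1 \<rho> (\<psi> j) = cutc \<rho> al tv sv gv j" if "j < 3" for \<rho> j
    using Z[OF that] that by (auto simp: cut1_def cutc_def al_def sv_def tv_def gv_def fun_eq_iff all_bool_eq)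
  have c2: "cut2 \<rho> (\<psi> j) = cutc \<rho> al gv sv tv j" if "j < 3" for \<rho> j
    using Z[OF that] that by (auto simp: cut2_def cutc_def al_def sv_def tv_def gv_def fun_eq_iff all_bool_eq)
  have nzpsi: "\<psi> j \<noteq> (\<lambda>_. 0)" if "j < 3" for j
  proof
    assume "\<psi> j = (\<lambda>_. 0)"
    then have "detc al sv tv = 0" using that by (intro detc_row0[of j]) (simp_all add: al_def sv_def tv_def)
    with D show False by simp
  qed
  {
    case (1 g)
    have "g = k" if "k < 3" for k
      using 1(4)[OF that] T3_nonzero[OF 1(1) 1(2) 1(3) nzpsi[OF that]] by (auto elim: correct.cases)
    then have "g = 0" "g = 1" by auto
    then show ?case by simp
  next
    case (2 p ms)
    have corr: "correct (apply_local p K (T3 A B C (\<psi> k))) k q" if "(K,q) \<in> set ms" "k < 3" for K q k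
      using correct_Measure[OF 2(7)[OF that(2)] that(1)] .
    have wfq: "wf_proto q" if "(K,q) \<in> set ms" for K q using 2(3) that by auto
    have IHq: "False" if "(K,q) \<in> set ms" "det2 A' \<noteq> 0" "det2 B' \<noteq> 0" "det2 C' \<noteq> 0"
       "\<And>k. k < 3 \<Longrightarrow> correct (T3 A' B' C' (\<psi> k)) k q" for K q A' B' C'
    proof -
      have "\<forall>A B C. det2 A \<noteq> 0 \<longrightarrow> det2 B \<noteq> 0 \<longrightarrow> det2 C \<noteq> 0 \<longrightarrow>
         (\<forall>j. j < 3 \<longrightarrow> correct (T3 A B C (\<psi> j)) j q) \<longrightarrow> False"
        using 2(3) that(1) by fastforce
      then show False using that by blast
    qed
    have sgK: "K = outer (zf K) (rf K)" if "(K,q) \<in> set ms" "\<forall>(K,q)\<in>set ms. det2 K = 0" for K q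
      using outer_zf_rf that by blast
    have p3: "p = 0 \<or> p = 1 \<or> p = 2" using 2(1) by auto
    then show ?case
    proof (elim disjE)
      assume p0: "p = 0"
      show False
      proof (cases "\<exists>(K,q)\<in>set ms. det2 K \<noteq> 0")
        case True
        then obtain K q where Kq: "(K,q) \<in> set ms" "det2 K \<noteq> 0" by blast
        show False
          by (rule IHq[OF Kq(1), of "mm K A" B C]) (use Kq 2(4,5,6) corr[OF Kq(1)] p0 T3_0 in \<open>simp_all add: det2_mm\<close>)
      next
        case False
        then have sg: "\<forall>(K,q)\<in>set ms. det2 K = 0" by blast
        show False
        proof (rule key3_gen[of 0 sv "-1" tv "2" gv al A B C ms])
          show "correct (st 0 (zf K) (T2 B C (cutc (rowm (rf K) A) al sv tv gv j))) j q"
            if "(K,q) \<in> set ms" "j < 3" for K q j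
          proof -
            have "apply_local 0 K (T3 A B C (\<psi> j)) = T3 (outer (zf K) (rowm (rf K) A)) B C (\<psi> j)"
              using sgK[OF that(1) sg] T3_0 mm_outer by metis
            then show ?thesis using corr[OF that(1) that(2)] p0 T3_outer0 c0[OF that(2)] by simp
          qed
        qed (use P0 D0 2(2,4,5,6) sg wfq p0 in auto)
      qed
    next
      assume p1: "p = 1"
      show False
      proof (cases "\<exists>(K,q)\<in>set ms. det2 K \<noteq> 0")
        case True
        then obtain K q where Kq: "(K,q) \<in> set ms" "det2 K \<noteq> 0" by blast
        show False
          by (rule IHq[OF Kq(1), of A "mm K B" C]) (use Kq 2(4,5,6) corr[OF Kq(1)] p1 T3_1 in \<open>simp_all add: det2_mm\<close>)
      next
        case False
        then have sg: "\<forall>(K,q)\<in>set ms. det2 K = 0" by blast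
        show False
        proof (rule key3_gen[of 1 tv "-1" sv "2" gv al B A C ms])
          show "correct (st 1 (zf K) (T2 A C (cutc (rowm (rf K) B) al tv sv gv j))) j q"
            if "(K,q) \<in> set ms" "j < 3" for K q j
          proof -
            have "apply_local 1 K (T3 A B C (\<psi> j)) = T3 A (outer (zf K) (rowm (rf K) B)) C (\<psi> j)"
              using sgK[OF that(1) sg] T3_1 mm_outer by metis
            then show ?thesis using corr[OF that(1) that(2)] p1 T3_outer1 c1[OF that(2)] by simp
          qed
        qed (use P1 D1 2(2,4,5,6) sg wfq p1 in auto)
      qed
    next
      assume p2: "p = 2"
      show False
      proof (cases "\<exists>(K,q)\<in>set ms. det2 K \<noteq> 0")
        case True
        then obtain K q where Kq: "(K,q) \<in> set ms" "det2 K \<noteq> 0" by blast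
        show False
          by (rule IHq[OF Kq(1), of A B "mm K C"]) (use Kq 2(4,5,6) corr[OF Kq(1)] p2 T3_2 in \<open>simp_all add: det2_mm\<close>)
      next
        case False
        then have sg: "\<forall>(K,q)\<in>set ms. det2 K = 0" by blast
        show False
        proof (rule key3_gen[of 2 gv "1/2" sv "1/2" tv al C A B ms])
          show "correct (st 2 (zf K) (T2 A B (cutc (rowm (rf K) C) al gv sv tv j))) j q"
            if "(K,q) \<in> set ms" "j < 3" for K q j
          proof -
            have "apply_local 2 K (T3 A B C (\<psi> j)) = T3 A B (outer (zf K) (rowm (rf K) C)) (\<psi> j)"
              using sgK[OF that(1) sg] T3_2 mm_outer by metis
            then show ?thesis using corr[OF that(1) that(2)] p2 T3_outer2 c2[OF that(2)] by simp
          qed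
        qed (use P2 D 2(2,4,5,6) sg wfq p2 in auto)
      qed
    qed
  }
qed


lemma sum3: "(\<Sum>i<(3::nat). f i) = f 0 + f 1 + (f 2 :: complex)"
  by (simp add: eval_nat_numeral)

lemma T3_Id: "T3 Id2 Id2 Id2 \<psi> = \<psi>"
  by (simp add: T3_def apply_Id2)

lemma det2_Id: "det2 Id2 \<noteq> 0"
  by (simp add: det2_def Id2_def)

lemma det3_mult:
  "det3 (c00*a0+c01*a1+c02*a2) (c00*b0+c01*b1+c02*b2) (c00*d0+c01*d1+c02*d2)
        (c10*a0+c11*a1+c12*a2) (c10*b0+c11*b1+c12*b2) (c10*d0+c11*d1+c12*d2)
        (c20*a0+c21*a1+c22*a2) (c20*b0+c21*b1+c22*b2) (c20*d0+c21*d1+c22*d2)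
   = det3 c00 c01 c02 c10 c11 c12 c20 c21 c22 * det3 a0 b0 d0 a1 b1 d1 a2 b2 d2"
  unfolding det3_def by algebra

lemma S3_coords:
  assumes "v \<in> S3"
  shows "v (True,True,False) = 0 \<and> v (True,False,True) = 0 \<and> v (False,True,True) = 0 \<and> v (True,True,True) = 0"
    and "v (True,False,False) + v (False,True,False) = 2 * v (False,False,True)"
  using assms by (auto simp: S3_def ket_def)

theorem theorem6:
  shows "\<forall>\<psi>. is_onb S3 3 \<psi> \<longrightarrow> \<not> LOCC_distinguishable 3 \<psi>"
proof (intro allI impI notI)
  fix \<psi> assume onb: "is_onb S3 3 \<psi>" and dist: "LOCC_distinguishable 3 \<psi>"
  from dist obtain P where wfP: "wf_proto P" and cor: "\<forall>i<3. correct (\<psi> i) i P"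
    unfolding LOCC_distinguishable_def by blast
  have mem: "\<psi> j \<in> S3" if "j < 3" for j using onb that unfolding is_onb_def by blast
  have span: "\<forall>v\<in>S3. \<exists>c. v = (\<lambda>x. \<Sum>i<3. c i * \<psi> i x)" using onb unfolding is_onb_def by blast
  let ?v1 = "\<lambda>x. 1 * ket False False False x + 0 * (ket True False False x - ket False True False x)
                  + 0 * (ket True False False x + ket False True False x + ket False False True x)"
  let ?v2 = "\<lambda>x. 0 * ket False False False x + 1 * (ket True False False x - ket False True False x)
                  + 0 * (ket True False False x + ket False True False x + ket False False True x)"
  let ?v3 = "\<lambda>x. 0 * ket False False False x + 0 * (ket True False False x - ket False True False x)
                  + 1 * (ket True False False x + ket False True False x + ket False False True x)"
  have "?v1 \<in> S3" "?v2 \<in> S3" "?v3 \<in> S3" unfolding S3_def by blast+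
  then obtain c1 c2 c3 where
    e1: "?v1 = (\<lambda>x. \<Sum>i<3. c1 i * \<psi> i x)" and
    e2: "?v2 = (\<lambda>x. \<Sum>i<3. c2 i * \<psi> i x)" and
    e3: "?v3 = (\<lambda>x. \<Sum>i<3. c3 i * \<psi> i x)"
    using span by meson
  let ?a = "\<lambda>j. \<psi> j (False,False,False)"
  let ?s = "\<lambda>j. \<psi> j (True,False,False)"
  let ?t = "\<lambda>j. \<psi> j (False,True,False)"
  have ev: "\<And>f g x. f = g \<Longrightarrow> f x = g x" by simp
  have r11: "c1 0 * ?a 0 + c1 1 * ?a 1 + c1 2 * ?a 2 = 1" using ev[OF e1, of "(False,False,False)"] by (simp add: ket_def sum3)
  have r12: "c1 0 * ?s 0 + c1 1 * ?s 1 + c1 2 * ?s 2 = 0" using ev[OF e1, of "(True,False,False)"] by (simp add: ket_def sum3)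
  have r13: "c1 0 * ?t 0 + c1 1 * ?t 1 + c1 2 * ?t 2 = 0" using ev[OF e1, of "(False,True,False)"] by (simp add: ket_def sum3)
  have r21: "c2 0 * ?a 0 + c2 1 * ?a 1 + c2 2 * ?a 2 = 0" using ev[OF e2, of "(False,False,False)"] by (simp add: ket_def sum3)
  have r22: "c2 0 * ?s 0 + c2 1 * ?s 1 + c2 2 * ?s 2 = 1" using ev[OF e2, of "(True,False,False)"] by (simp add: ket_def sum3)
  have r23: "c2 0 * ?t 0 + c2 1 * ?t 1 + c2 2 * ?t 2 = -1" using ev[OF e2, of "(False,True,False)"] by (simp add: ket_def sum3)
  have r31: "c3 0 * ?a 0 + c3 1 * ?a 1 + c3 2 * ?a 2 = 0" using ev[OF e3, of "(False,False,False)"] by (simp add: ket_def sum3)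
  have r32: "c3 0 * ?s 0 + c3 1 * ?s 1 + c3 2 * ?s 2 = 1" using ev[OF e3, of "(True,False,False)"] by (simp add: ket_def sum3)
  have r33: "c3 0 * ?t 0 + c3 1 * ?t 1 + c3 2 * ?t 2 = 1" using ev[OF e3, of "(False,True,False)"] by (simp add: ket_def sum3)
  have "det3 1 0 0 0 1 (-1) 0 1 1 = det3 (c1 0) (c1 1) (c1 2) (c2 0) (c2 1) (c2 2) (c3 0) (c3 1) (c3 2) * detc ?a ?s ?t"
    using det3_mult[of "c1 0" "?a 0" "c1 1" "?a 1" "c1 2" "?a 2" "?s 0" "?s 1" "?s 2" "?t 0" "?t 1" "?t 2"
       "c2 0" "c2 1" "c2 2" "c3 0" "c3 1" "c3 2"]
    unfolding r11 r12 r13 r21 r22 r23 r31 r32 r33 detc_def by simp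
  then have Dl: "detc ?a ?s ?t \<noteq> 0" by (auto simp: det3_def)
  show False
  proof (rule C3[OF wfP _ _ Dl det2_Id det2_Id det2_Id])
    show "\<psi> j (True,True,False) = 0 \<and> \<psi> j (True,False,True) = 0 \<and> \<psi> j (False,True,True) = 0 \<and> \<psi> j (True,True,True) = 0"
      if "j < 3" for j using S3_coords(1)[OF mem[OF that]] .
    show "\<psi> j (True,False,False) + \<psi> j (False,True,False) = 2 * \<psi> j (False,False,True)"
      if "j < 3" for j using S3_coords(2)[OF mem[OF that]] .
    show "correct (T3 Id2 Id2 Id2 (\<psi> j)) j P" if "j < 3" for j using cor that by (simp add: T3_Id)
  qed
qed

end
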